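(* Let $k$ be an algebraically closed field, $G=\mathrm{GL}_3(k)$, $\mathfrak g=\mathfrak{gl}_3(k)$, $k[\mathfrak g]=k[\xi_{ij}:1\le i,j\le3]$, $\mathcal X=(\xi_{ij})$, and for $i,j$ let $|\mathcal X^{(i,j)}|$ denote the determinant of $\mathcal X$ with row $i$ and column $j$ removed. Put $$d_1=\xi_{21}|\mathcal X^{(1,3)}|+\xi_{31}|\mathcal X^{(1,2)}|,\qquad d_2=\xi_{31}|\mathcal X^{(2,3)}|+\xi_{32}|\mathcal X^{(1,3)}|.$$ (i) Let $\lambda=l_1\varpi_1+l_2\varpi_2$ with $l_1,l_2\ge0$ integers and $3\mid(l_1-l_2)$, and put $a=\min(l_1,l_2)$. Let $d=d_1^{(l_1-l_2)/3}$ if $l_1\ge l_2$ and $d=d_2^{(l_2-l_1)/3}$ otherwise. Then the elements $d\,\xi_{31}^i|\mathcal X^{(1,3)}|^{a-i}$, $0\le i\le a$, form a basis of the $k[\mathfrak g]^G$-module $k[\mathfrak g]^U_\lambda$. (ii) The $k$-algebra $k[\mathfrak g]^U$ is generated by $s_1,s_2,s_3,\xi_{31},|\mathcal X^{(1,3)}|,d_1,d_2$, and the kernel of the corresponding surjection from the polynomial ring in seven variables onto $k[\mathfrak g]^U$ is generated by the single relation $$d_1d_2-|\mathcal X^{(1,3)}|^3-\xi_{31}|\mathcal X^{(1,3)}|^2s_1-\xi_{31}^2|\mathcal X^{(1,3)}|s_2-\xi_{31}^3s_3=0.$$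
   Context: $G$ acts on $\mathfrak g$ by conjugation and on $k[\mathfrak g]$ by $(g\cdot f)(x)=f(g^{-1}xg)$. $U$ is the subgroup of upper unitriangular matrices, $T$ the diagonal torus; weights of $T$ are identified with $\mathbb Z^3$ (basis $\varepsilon_1,\varepsilon_2,\varepsilon_3$, $(\lambda_1,\lambda_2,\lambda_3)$ being $\mathrm{diag}(a_1,a_2,a_3)\mapsto\prod a_i^{\lambda_i}$), with $\varpi_1=\varepsilon_1-\frac13(1,1,1)$, $\varpi_2=\varepsilon_1+\varepsilon_2-\frac23(1,1,1)$. $k[\mathfrak g]^U_\lambda$ is the space of $U$-invariant polynomials of $T$-weight $\lambda$, a module over $k[\mathfrak g]^G$. $s_i(x)=\mathrm{tr}(\wedge^i x)$ for $i=1,2,3$. *)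

theory Defs
  imports "HOL-Analysis.Analysis" "HOL-Library.Poly_Mapping"
    "HOL-Computational_Algebra.Polynomial"
begin

text \<open>Matrices in gl_3(k) are elements of type 'k^3^3.  We index rows and
columns by the naturals 1,2,3, mapped to the numeral type 3 via of_nat
(so that 3 corresponds to the element 0 of type 3).\<close>

definition entry :: "'k^3^3 \<Rightarrow> nat \<Rightarrow> nat \<Rightarrow> 'k" where
  "entry x i j = x $ (of_nat i :: 3) $ (of_nat j :: 3)"

definition xi :: "nat \<Rightarrow> nat \<Rightarrow> 'k^3^3 \<Rightarrow> 'k" where
  "xi i j = (\<lambda>x. entry x i j)"

definition minor :: "nat \<Rightarrow> nat \<Rightarrow> 'k::comm_ring_1^3^3 \<Rightarrow> 'k" where
  "minor i j = (\<lambda>x.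
     let rs = sorted_list_of_set ({1,2,3} - {i});
         cs = sorted_list_of_set ({1,2,3} - {j})
     in entry x (rs!0) (cs!0) * entry x (rs!1) (cs!1)
        - entry x (rs!0) (cs!1) * entry x (rs!1) (cs!0))"

text \<open>s_i(x) = tr(wedge^i x): trace, sum of principal 2x2 minors, determinant.\<close>
definition s1 :: "'k::comm_ring_1^3^3 \<Rightarrow> 'k" where
  "s1 = (\<lambda>x. \<Sum>i\<in>{1,2,3}. entry x i i)"
definition s2 :: "'k::comm_ring_1^3^3 \<Rightarrow> 'k" where
  "s2 = (\<lambda>x. \<Sum>i\<in>{1,2,3}. minor i i x)"
definition s3 :: "'k::comm_ring_1^3^3 \<Rightarrow> 'k" where
  "s3 = (\<lambda>x. det x)"

definition d1 :: "'k::comm_ring_1^3^3 \<Rightarrow> 'k" where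
  "d1 = (\<lambda>x. xi 2 1 x * minor 1 3 x + xi 3 1 x * minor 1 2 x)"
definition d2 :: "'k::comm_ring_1^3^3 \<Rightarrow> 'k" where
  "d2 = (\<lambda>x. xi 3 1 x * minor 2 3 x + xi 3 2 x * minor 1 3 x)"

text \<open>k[g]: the algebra of polynomial functions on gl_3 (generated by the
coordinate functions).  Since k is algebraically closed, hence infinite,
this is isomorphic to the polynomial ring k[xi_ij].\<close>
inductive_set poly_fun :: "('k::comm_ring_1^3^3 \<Rightarrow> 'k) set" where
  pf_const: "(\<lambda>x. c) \<in> poly_fun"
| pf_coord: "(\<lambda>x. x $ i $ j) \<in> poly_fun"
| pf_add: "f \<in> poly_fun \<Longrightarrow> g \<in> poly_fun \<Longrightarrow> (\<lambda>x. f x + g x) \<in> poly_fun"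
| pf_mult: "f \<in> poly_fun \<Longrightarrow> g \<in> poly_fun \<Longrightarrow> (\<lambda>x. f x * g x) \<in> poly_fun"

definition act :: "'k::field^3^3 \<Rightarrow> ('k^3^3 \<Rightarrow> 'k) \<Rightarrow> ('k^3^3 \<Rightarrow> 'k)" where
  "act g f = (\<lambda>x. f (matrix_inv g ** x ** g))"

definition upper_unitri :: "'k::field^3^3 \<Rightarrow> bool" where
  "upper_unitri u \<longleftrightarrow> (\<forall>i\<in>{1,2,3}. \<forall>j\<in>{1,2,3}.
      (j < i \<longrightarrow> entry u i j = 0) \<and> (i = j \<longrightarrow> entry u i j = 1))"

definition diag3 :: "'k::field \<Rightarrow> 'k \<Rightarrow> 'k \<Rightarrow> 'k^3^3" where
  "diag3 a1 a2 a3 = (\<chi> i j. if i = j then (if i = 1 then a1 else if i = 2 then a2 else a3) else 0)"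

definition inv_G :: "('k::field^3^3 \<Rightarrow> 'k) set" where
  "inv_G = {f \<in> poly_fun. \<forall>g. invertible g \<longrightarrow> act g f = f}"

definition inv_U :: "('k::field^3^3 \<Rightarrow> 'k) set" where
  "inv_U = {f \<in> poly_fun. \<forall>u. upper_unitri u \<longrightarrow> act u f = f}"

definition inv_U_wt :: "int \<Rightarrow> int \<Rightarrow> int \<Rightarrow> ('k::field^3^3 \<Rightarrow> 'k) set" where
  "inv_U_wt l1 l2 l3 = {f \<in> inv_U. \<forall>a1 a2 a3. a1 \<noteq> 0 \<and> a2 \<noteq> 0 \<and> a3 \<noteq> 0 \<longrightarrow>
      act (diag3 a1 a2 a3) f = (\<lambda>x. (power_int a1 l1 * power_int a2 l2 * power_int a3 l3) * f x)}"

definition is_module_basis ::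
  "('a \<Rightarrow> 'k::comm_ring_1) set \<Rightarrow> ('a \<Rightarrow> 'k) set \<Rightarrow> (nat \<Rightarrow> 'a \<Rightarrow> 'k) \<Rightarrow> nat set \<Rightarrow> bool" where
  "is_module_basis R M b I \<longleftrightarrow>
     (\<forall>i\<in>I. b i \<in> M) \<and>
     (\<forall>f\<in>M. \<exists>c. (\<forall>i\<in>I. c i \<in> R) \<and> f = (\<lambda>x. \<Sum>i\<in>I. c i x * b i x)) \<and>
     (\<forall>c. (\<forall>i\<in>I. c i \<in> R) \<and> (\<lambda>x. \<Sum>i\<in>I. c i x * b i x) = (\<lambda>x. 0)
          \<longrightarrow> (\<forall>i\<in>I. c i = (\<lambda>x. 0)))"

inductive_set subalg_gen :: "('a \<Rightarrow> 'k::comm_ring_1) set \<Rightarrow> ('a \<Rightarrow> 'k) set" for S where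
  sg_const: "(\<lambda>x. c) \<in> subalg_gen S"
| sg_gen: "f \<in> S \<Longrightarrow> f \<in> subalg_gen S"
| sg_add: "f \<in> subalg_gen S \<Longrightarrow> g \<in> subalg_gen S \<Longrightarrow> (\<lambda>x. f x + g x) \<in> subalg_gen S"
| sg_mult: "f \<in> subalg_gen S \<Longrightarrow> g \<in> subalg_gen S \<Longrightarrow> (\<lambda>x. f x * g x) \<in> subalg_gen S"

type_synonym 'k mpoly = "(nat \<Rightarrow>\<^sub>0 nat) \<Rightarrow>\<^sub>0 'k"

definition mvar :: "nat \<Rightarrow> 'k::comm_ring_1 mpoly" where
  "mvar i = Poly_Mapping.single (Poly_Mapping.single i 1) 1"

definition mpoly_vars_in :: "nat set \<Rightarrow> 'k::zero mpoly \<Rightarrow> bool" where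
  "mpoly_vars_in V P \<longleftrightarrow> (\<forall>m\<in>Poly_Mapping.keys P. Poly_Mapping.keys m \<subseteq> V)"

definition mpoly_eval :: "'k::comm_ring_1 mpoly \<Rightarrow> (nat \<Rightarrow> 'a \<Rightarrow> 'k) \<Rightarrow> 'a \<Rightarrow> 'k" where
  "mpoly_eval P v = (\<lambda>x. \<Sum>m\<in>Poly_Mapping.keys P. Poly_Mapping.lookup P m * (\<Prod>i\<in>Poly_Mapping.keys m. v i x ^ Poly_Mapping.lookup m i))"

end

theory Submission
  imports Defs
begin


definition mk3 :: "'k::zero \<Rightarrow> 'k \<Rightarrow> 'k \<Rightarrow> 'k \<Rightarrow> 'k \<Rightarrow> 'k \<Rightarrow> 'k \<Rightarrow> 'k \<Rightarrow> 'k \<Rightarrow> 'k^3^3" where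
  "mk3 a b c d e f g h i = vector [vector [a,b,c], vector [d,e,f], vector [g,h,i]]"

lemma mk3_nth [simp]:
  "mk3 a b c d e f g h i $1$1 = a" "mk3 a b c d e f g h i $1$2 = b" "mk3 a b c d e f g h i $1$3 = c"
  "mk3 a b c d e f g h i $2$1 = d" "mk3 a b c d e f g h i $2$2 = e" "mk3 a b c d e f g h i $2$3 = f"
  "mk3 a b c d e f g h i $3$1 = g" "mk3 a b c d e f g h i $3$2 = h" "mk3 a b c d e f g h i $3$3 = i"
  by (simp_all add: mk3_def)

lemma mk3_eq_iff:
  "(mk3 a b c d e f g h i = mk3 a' b' c' d' e' f' g' h' i') \<longleftrightarrow>
   a = a' \<and> b = b' \<and> c = c' \<and> d = d' \<and> e = e' \<and> f = f' \<and> g = g' \<and> h = h' \<and> i = i'"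
  apply (rule iffI)
  apply (metis mk3_nth)
  by simp

lemma mk3_expand: "(x::'k::zero^3^3) = mk3 (x$1$1) (x$1$2) (x$1$3) (x$2$1) (x$2$2) (x$2$3) (x$3$1) (x$3$2) (x$3$3)"
  by (simp add: vec_eq_iff forall_3)

lemma mk3_mult:
  "mk3 a b c d e f g h i ** mk3 a' b' c' d' e' f' g' h' i' =
   mk3 (a*a'+b*d'+c*g') (a*b'+b*e'+c*h') (a*c'+b*f'+c*i')
       (d*a'+e*d'+f*g') (d*b'+e*e'+f*h') (d*c'+e*f'+f*i')
       (g*a'+h*d'+i*g') (g*b'+h*e'+i*h') (g*c'+h*f'+i*i')"
  by (simp add: vec_eq_iff forall_3 matrix_matrix_mult_def sum_3)

lemma mat1_mk3: "(mat 1 :: 'k::{zero,one}^3^3) = mk3 1 0 0 0 1 0 0 0 1"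
  by (simp add: vec_eq_iff forall_3 mat_def)

lemma matrix_inv_eqI:
  fixes A B :: "'k::semiring_1^'n^'n"
  assumes "A ** B = mat 1" "B ** A = mat 1"
  shows "matrix_inv A = B"
proof -
  have ex: "\<exists>A'. A ** A' = mat 1 \<and> A' ** A = mat 1" using assms by blast
  define C where "C = matrix_inv A"
  have C: "A ** C = mat 1 \<and> C ** A = mat 1"
    unfolding C_def matrix_inv_def by (rule someI_ex[OF ex])
  have "C = C ** (A ** B)" using assms by simp
  also have "\<dots> = (C ** A) ** B" by (simp add: matrix_mul_assoc)
  also have "\<dots> = B" using C by simp
  finally show ?thesis unfolding C_def .
qed

lemma entry_simps [simp]:
  "entry x 1 1 = x$1$1" "entry x 1 2 = x$1$2" "entry x 1 3 = x$1$3"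
  "entry x 2 1 = x$2$1" "entry x 2 2 = x$2$2" "entry x 2 3 = x$2$3"
  "entry x 3 1 = x$3$1" "entry x 3 2 = x$3$2" "entry x 3 3 = x$3$3"
  unfolding entry_def by simp_all

lemma xi_simps [simp]:
  "xi 1 1 x = x$1$1" "xi 1 2 x = x$1$2" "xi 1 3 x = x$1$3"
  "xi 2 1 x = x$2$1" "xi 2 2 x = x$2$2" "xi 2 3 x = x$2$3"
  "xi 3 1 x = x$3$1" "xi 3 2 x = x$3$2" "xi 3 3 x = x$3$3"
  unfolding xi_def entry_def by simp_all

lemma sl23: "sorted_list_of_set ({1,2,3::nat} - {1}) = [2,3]"
  by (simp add: insert_Diff_if)
lemma sl13: "sorted_list_of_set ({1,2,3::nat} - {2}) = [1,3]"
  by (simp add: insert_Diff_if)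
lemma sl12: "sorted_list_of_set ({1,2,3::nat} - {3}) = [1,2]"
  by (simp add: insert_Diff_if)

lemma minor_simps:
  "minor 1 1 x = x$2$2 * x$3$3 - x$2$3 * x$3$2"
  "minor 1 2 x = x$2$1 * x$3$3 - x$2$3 * x$3$1"
  "minor 1 3 x = x$2$1 * x$3$2 - x$2$2 * x$3$1"
  "minor 2 1 x = x$1$2 * x$3$3 - x$1$3 * x$3$2"
  "minor 2 2 x = x$1$1 * x$3$3 - x$1$3 * x$3$1"
  "minor 2 3 x = x$1$1 * x$3$2 - x$1$2 * x$3$1"
  "minor 3 1 x = x$1$2 * x$2$3 - x$1$3 * x$2$2"
  "minor 3 2 x = x$1$1 * x$2$3 - x$1$3 * x$2$1"
  "minor 3 3 x = x$1$1 * x$2$2 - x$1$2 * x$2$1"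
  unfolding minor_def Let_def sl23 sl13 sl12 entry_def by simp_all

lemmas entry_simps' [simp] = entry_simps[unfolded One_nat_def]
lemmas xi_simps' [simp] = xi_simps[unfolded One_nat_def]
lemmas minor_simps' = minor_simps[unfolded One_nat_def]


lemma s1_simp: "s1 x = x$1$1 + x$2$2 + x$3$3"
  unfolding s1_def by (simp add: add.assoc)
lemma s2_simp: "s2 x = (x$2$2 * x$3$3 - x$2$3 * x$3$2) + (x$1$1 * x$3$3 - x$1$3 * x$3$1) + (x$1$1 * x$2$2 - x$1$2 * x$2$1)"
  unfolding s2_def by (simp add: minor_simps minor_simps' add.assoc)
lemma s3_simp: "s3 x = x$1$1 * x$2$2 * x$3$3 +
    x$1$2 * x$2$3 * x$3$1 +
    x$1$3 * x$2$1 * x$3$2 -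
    x$1$1 * x$2$3 * x$3$2 -
    x$1$2 * x$2$1 * x$3$3 -
    x$1$3 * x$2$2 * x$3$1"
  unfolding s3_def by (rule det_3)
lemma d1_simp: "d1 x = x$2$1 * (x$2$1 * x$3$2 - x$2$2 * x$3$1) + x$3$1 * (x$2$1 * x$3$3 - x$2$3 * x$3$1)"
  unfolding d1_def by (simp add: minor_simps minor_simps')
lemma d2_simp: "d2 x = x$3$1 * (x$1$1 * x$3$2 - x$1$2 * x$3$1) + x$3$2 * (x$2$1 * x$3$2 - x$2$2 * x$3$1)"
  unfolding d2_def by (simp add: minor_simps minor_simps')
lemmas gen_simps = s1_simp s2_simp s3_simp d1_simp d2_simp minor_simps minor_simps'

lemma relation_holds:
  fixes x :: "'k::comm_ring_1^3^3"
  shows "d1 x * d2 x - minor 1 3 x ^ 3 - xi 3 1 x * minor 1 3 x ^ 2 * s1 x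
     - xi 3 1 x ^ 2 * minor 1 3 x * s2 x - xi 3 1 x ^ 3 * s3 x = 0"
  unfolding gen_simps xi_simps by (simp add: algebra_simps power2_eq_square power3_eq_cube)

definition ut :: "'k::comm_ring_1 \<Rightarrow> 'k \<Rightarrow> 'k \<Rightarrow> 'k^3^3" where
  "ut a b e = mk3 1 a b 0 1 e 0 0 1"

lemma upper_unitri_ut:
  fixes u :: "'k::field^3^3"
  assumes "upper_unitri u" shows "u = ut (u$1$2) (u$1$3) (u$2$3)"
proof -
  have "u$2$1 = 0" "u$3$1 = 0" "u$3$2 = 0" "u$1$1 = 1" "u$2$2 = 1" "u$3$3 = 1"
    using assms unfolding upper_unitri_def by (auto simp: One_nat_def dest!: bspec[of _ _ 1] bspec[of _ _ 2] bspec[of _ _ 3])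
  then show ?thesis unfolding ut_def by (subst mk3_expand) simp
qed

lemma ut_inv: "matrix_inv (ut a b e :: 'k::comm_ring_1^3^3) = mk3 1 (-a) (a*e - b) 0 1 (-e) 0 0 1"
  by (rule matrix_inv_eqI) (simp_all add: ut_def mk3_mult mat1_mk3 algebra_simps)

lemma conj_ut: "matrix_inv (ut a b e) ** (x::'k::comm_ring_1^3^3) ** ut a b e =
  mk3 1 (-a) (a*e - b) 0 1 (-e) 0 0 1 ** mk3 (x$1$1) (x$1$2) (x$1$3) (x$2$1) (x$2$2) (x$2$3) (x$3$1) (x$3$2) (x$3$3) ** mk3 1 a b 0 1 e 0 0 1"
  by (subst mk3_expand[of x]) (simp add: ut_inv[unfolded ut_def] ut_def)

lemma ut_inv_xi31: "xi 3 1 (matrix_inv (ut a b e) ** (x::'k::comm_ring_1^3^3) ** ut a b e) = xi 3 1 x"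
  unfolding conj_ut by (simp add: mk3_mult)
lemma ut_inv_m13: "minor 1 3 (matrix_inv (ut a b e) ** (x::'k::comm_ring_1^3^3) ** ut a b e) = minor 1 3 x"
  unfolding conj_ut by (simp add: mk3_mult minor_simps minor_simps') (simp add: algebra_simps)
lemma ut_inv_d1: "d1 (matrix_inv (ut a b e) ** (x::'k::comm_ring_1^3^3) ** ut a b e) = d1 x"
  unfolding conj_ut by (simp add: mk3_mult d1_simp) (simp add: algebra_simps)
lemma ut_inv_d2: "d2 (matrix_inv (ut a b e) ** (x::'k::comm_ring_1^3^3) ** ut a b e) = d2 x"
  unfolding conj_ut by (simp add: mk3_mult d2_simp) (simp add: algebra_simps)


lemma invertible_inv:
  fixes g :: "'k::field^'n^'n"
  assumes "invertible g"
  shows "g ** matrix_inv g = mat 1" "matrix_inv g ** g = mat 1"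
proof -
  have "\<exists>A'. g ** A' = mat 1 \<and> A' ** g = mat 1" using assms unfolding invertible_def by blast
  from someI_ex[OF this] show "g ** matrix_inv g = mat 1" "matrix_inv g ** g = mat 1"
    unfolding matrix_inv_def by auto
qed

lemma s3_conj:
  fixes g :: "'k::field^3^3"
  assumes "invertible g" shows "s3 (matrix_inv g ** x ** g) = s3 x"
proof -
  have "det (matrix_inv g) * det g = 1"
    using invertible_inv(2)[OF assms] by (metis det_I det_mul)
  then show ?thesis unfolding s3_def by (simp add: det_mul)
qed

lemma s1_trace: "s1 x = trace x"
  unfolding s1_simp trace_def sum_3 by simp

lemma s1_conj:
  fixes g :: "'k::field^3^3"
  assumes "invertible g" shows "s1 (matrix_inv g ** x ** g) = s1 x"
proof -
  have "trace (matrix_inv g ** x ** g) = trace (g ** (matrix_inv g ** x))"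
    by (rule trace_mul_sym)
  also have "\<dots> = trace x" using invertible_inv(1)[OF assms]
    by (simp add: matrix_mul_assoc)
  finally show ?thesis by (simp add: s1_trace)
qed

lemma det_one_minus: "det (mat 1 - (x::'k::comm_ring_1^3^3)) = 1 - s1 x + s2 x - s3 x"
  unfolding det_3 s1_simp s2_simp s3_simp
  by (simp add: mat_def algebra_simps)

lemma matrix_diff_ldistrib: "(A::'a::comm_ring_1^'n^'m) ** (B - C) = A ** B - A ** C"
  by (simp add: matrix_matrix_mult_def vec_eq_iff sum_subtractf algebra_simps)
lemma matrix_diff_rdistrib: "((B::'a::comm_ring_1^'n^'m) - C) ** A = B ** A - C ** A"
  by (simp add: matrix_matrix_mult_def vec_eq_iff sum_subtractf algebra_simps)

lemma s2_conj:
  fixes g :: "'k::field^3^3"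
  assumes "invertible g" shows "s2 (matrix_inv g ** x ** g) = s2 x"
proof -
  have dd: "det (matrix_inv g) * det g = 1"
    using invertible_inv(2)[OF assms] by (metis det_I det_mul)
  have "mat 1 - matrix_inv g ** x ** g = matrix_inv g ** (mat 1 - x) ** g"
    by (simp add: matrix_diff_ldistrib matrix_diff_rdistrib invertible_inv[OF assms])
  then have "det (mat 1 - matrix_inv g ** x ** g) = det (mat 1 - x)"
    using dd by (simp add: det_mul)
  then show ?thesis using s1_conj[OF assms, of x] s3_conj[OF assms, of x]
    by (simp add: det_one_minus)
qed

lemma act_s1: "invertible g \<Longrightarrow> act g s1 = s1" unfolding act_def by (simp add: s1_conj)
lemma act_s2: "invertible g \<Longrightarrow> act g s2 = s2" unfolding act_def by (simp add: s2_conj)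
lemma act_s3: "invertible g \<Longrightarrow> act g s3 = s3" unfolding act_def by (simp add: s3_conj)

lemma act_ut_xi31: "upper_unitri u \<Longrightarrow> act u (xi 3 1) = (xi 3 1 :: 'k::field^3^3 \<Rightarrow> 'k)"
  unfolding act_def by (subst upper_unitri_ut, assumption, subst upper_unitri_ut, assumption, simp only: ut_inv_xi31)
lemma act_ut_m13: "upper_unitri u \<Longrightarrow> act u (minor 1 3) = (minor 1 3 :: 'k::field^3^3 \<Rightarrow> 'k)"
  unfolding act_def by (subst upper_unitri_ut, assumption, subst upper_unitri_ut, assumption, simp only: ut_inv_m13)
lemma act_ut_d1: "upper_unitri u \<Longrightarrow> act u d1 = (d1 :: 'k::field^3^3 \<Rightarrow> 'k)"
  unfolding act_def by (subst upper_unitri_ut, assumption, subst upper_unitri_ut, assumption, simp only: ut_inv_d1)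
lemma act_ut_d2: "upper_unitri u \<Longrightarrow> act u d2 = (d2 :: 'k::field^3^3 \<Rightarrow> 'k)"
  unfolding act_def by (subst upper_unitri_ut, assumption, subst upper_unitri_ut, assumption, simp only: ut_inv_d2)


definition mon :: "(nat \<Rightarrow> 'a \<Rightarrow> 'k::comm_ring_1) \<Rightarrow> (nat \<Rightarrow>\<^sub>0 nat) \<Rightarrow> 'a \<Rightarrow> 'k" where
  "mon v m x = (\<Prod>i\<in>Poly_Mapping.keys m. v i x ^ Poly_Mapping.lookup m i)"

lemma mpoly_eval_mon: "mpoly_eval P v x = (\<Sum>m\<in>Poly_Mapping.keys P. Poly_Mapping.lookup P m * mon v m x)"
  unfolding mpoly_eval_def mon_def by simp

lemma mon_superset:
  assumes "finite S" "Poly_Mapping.keys m \<subseteq> S"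
  shows "mon v m x = (\<Prod>i\<in>S. v i x ^ Poly_Mapping.lookup m i)"
  unfolding mon_def
  by (rule prod.mono_neutral_left[OF assms(1,2)]) (auto simp: in_keys_iff)

lemma eval_superset:
  assumes "finite S" "Poly_Mapping.keys P \<subseteq> S"
  shows "mpoly_eval P v x = (\<Sum>m\<in>S. Poly_Mapping.lookup P m * mon v m x)"
  unfolding mpoly_eval_mon
  by (rule sum.mono_neutral_left[OF assms(1,2)]) (auto simp: in_keys_iff)

lemma keys_add_nat: "Poly_Mapping.keys (m + l :: nat \<Rightarrow>\<^sub>0 nat) = Poly_Mapping.keys m \<union> Poly_Mapping.keys l"
  by (auto simp: in_keys_iff lookup_add)

lemma mon_add: "mon v (m + l) x = mon v m x * mon v l x"
proof -
  let ?S = "Poly_Mapping.keys m \<union> Poly_Mapping.keys l"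
  have "mon v (m + l) x = (\<Prod>i\<in>?S. v i x ^ Poly_Mapping.lookup (m + l) i)"
    by (rule mon_superset) (auto simp: keys_add_nat)
  also have "\<dots> = (\<Prod>i\<in>?S. v i x ^ Poly_Mapping.lookup m i) * (\<Prod>i\<in>?S. v i x ^ Poly_Mapping.lookup l i)"
    by (simp add: lookup_add power_add prod.distrib)
  also have "\<dots> = mon v m x * mon v l x"
    using mon_superset[of ?S m v x] mon_superset[of ?S l v x] by simp
  finally show ?thesis .
qed

lemma mon_zero [simp]: "mon v 0 x = 1" unfolding mon_def by simp

lemma mon_single: "mon v (Poly_Mapping.single i n) x = v i x ^ n"
  unfolding mon_def by simp

lemma eval_zero [simp]: "mpoly_eval 0 v = (\<lambda>x. 0)"
  unfolding mpoly_eval_def by simp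

lemma eval_add: "mpoly_eval (P + Q) v x = mpoly_eval P v x + mpoly_eval Q v x"
proof -
  let ?S = "Poly_Mapping.keys P \<union> Poly_Mapping.keys Q"
  have "mpoly_eval (P + Q) v x = (\<Sum>m\<in>?S. Poly_Mapping.lookup (P + Q) m * mon v m x)"
    by (rule eval_superset) (auto dest: set_mp[OF keys_add])
  also have "\<dots> = (\<Sum>m\<in>?S. Poly_Mapping.lookup P m * mon v m x) + (\<Sum>m\<in>?S. Poly_Mapping.lookup Q m * mon v m x)"
    by (simp add: lookup_add algebra_simps sum.distrib)
  also have "\<dots> = mpoly_eval P v x + mpoly_eval Q v x"
    using eval_superset[of ?S P v x] eval_superset[of ?S Q v x] by simp
  finally show ?thesis .
qed

lemma eval_single: "mpoly_eval (Poly_Mapping.single m c) v x = c * mon v m x"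
  unfolding mpoly_eval_mon by simp

lemma eval_sum: "finite S \<Longrightarrow> mpoly_eval (sum f S) v x = (\<Sum>s\<in>S. mpoly_eval (f s) v x)"
  by (induction S rule: finite_induct) (simp_all add: eval_add)

lemma poly_mapping_sum_single:
  "(P :: 'a \<Rightarrow>\<^sub>0 'b::comm_monoid_add) = (\<Sum>m\<in>Poly_Mapping.keys P. Poly_Mapping.single m (Poly_Mapping.lookup P m))"
  by (rule poly_mapping_eqI) (simp add: lookup_sum lookup_single when_def in_keys_iff)

lemma eval_mult: "mpoly_eval (P * Q) v x = mpoly_eval P v x * mpoly_eval Q v x"
proof -
  have "P * Q = (\<Sum>m\<in>Poly_Mapping.keys P. Poly_Mapping.single m (Poly_Mapping.lookup P m)) *
     (\<Sum>l\<in>Poly_Mapping.keys Q. Poly_Mapping.single l (Poly_Mapping.lookup Q l))"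
    by (subst (1) poly_mapping_sum_single, subst (1) poly_mapping_sum_single[of Q]) (rule refl)
  also have "\<dots> = (\<Sum>m\<in>Poly_Mapping.keys P. \<Sum>l\<in>Poly_Mapping.keys Q.
      Poly_Mapping.single (m + l) (Poly_Mapping.lookup P m * Poly_Mapping.lookup Q l))"
    by (simp add: sum_distrib_left sum_distrib_right mult_single) (rule sum.swap)
  finally have "mpoly_eval (P * Q) v x = (\<Sum>m\<in>Poly_Mapping.keys P. \<Sum>l\<in>Poly_Mapping.keys Q.
      Poly_Mapping.lookup P m * Poly_Mapping.lookup Q l * (mon v m x * mon v l x))"
    by (simp add: eval_sum eval_single mon_add)
  also have "\<dots> = mpoly_eval P v x * mpoly_eval Q v x"
    unfolding mpoly_eval_mon sum_product by (simp add: ac_simps)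
  finally show ?thesis .
qed


lemma eval_uminus: "mpoly_eval (- P) v x = - mpoly_eval P v x"
proof -
  have "mpoly_eval (P + - P) v x = 0" by simp
  then show ?thesis by (simp only: eval_add) (simp add: eq_neg_iff_add_eq_0 add.commute)
qed

lemma eval_diff: "mpoly_eval (P - Q) v x = mpoly_eval P v x - mpoly_eval Q v x"
proof -
  have "mpoly_eval (P - Q) v x = mpoly_eval (P + - Q) v x" by simp
  also have "\<dots> = mpoly_eval P v x + mpoly_eval (- Q) v x" by (rule eval_add)
  finally show ?thesis by (simp add: eval_uminus)
qed

lemma eval_one [simp]: "mpoly_eval 1 v x = 1"
  using eval_single[of 0 1 v x] by simp

lemma eval_power: "mpoly_eval (P ^ n) v x = mpoly_eval P v x ^ n"
  by (induction n) (simp_all add: eval_mult)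

lemma eval_mvar: "mpoly_eval (mvar i) v x = v i x"
  unfolding mvar_def by (simp add: eval_single mon_single)

lemma eval_const: "mpoly_eval (Poly_Mapping.single 0 c) v x = c"
  by (simp add: eval_single)

lemmas eval_simps = eval_add eval_mult eval_diff eval_uminus eval_power eval_mvar eval_const eval_one

lemma vars_zero [simp]: "mpoly_vars_in V 0" unfolding mpoly_vars_in_def by simp
lemma vars_add: "mpoly_vars_in V P \<Longrightarrow> mpoly_vars_in V Q \<Longrightarrow> mpoly_vars_in V (P + Q)"
  unfolding mpoly_vars_in_def using keys_add[of P Q] by blast
lemma vars_uminus: "mpoly_vars_in V (P::'k::comm_ring_1 mpoly) \<Longrightarrow> mpoly_vars_in V (- P)"
  unfolding mpoly_vars_in_def by simp
lemma vars_diff: "mpoly_vars_in V (P::'k::comm_ring_1 mpoly) \<Longrightarrow> mpoly_vars_in V Q \<Longrightarrow> mpoly_vars_in V (P - Q)"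
  using vars_add[of V P "-Q"] vars_uminus[of V Q] by (simp add: diff_conv_add_uminus del: add_uminus_conv_diff)
lemma vars_mult: "mpoly_vars_in V P \<Longrightarrow> mpoly_vars_in V Q \<Longrightarrow> mpoly_vars_in V (P * Q)"
  unfolding mpoly_vars_in_def
proof (intro ballI)
  fix m assume P: "\<forall>m\<in>Poly_Mapping.keys P. Poly_Mapping.keys m \<subseteq> V"
    and Q: "\<forall>m\<in>Poly_Mapping.keys Q. Poly_Mapping.keys m \<subseteq> V"
    and m: "m \<in> Poly_Mapping.keys (P * Q)"
  then obtain a b where "m = a + b" "a \<in> Poly_Mapping.keys P" "b \<in> Poly_Mapping.keys Q"
    using keys_mult[of P Q] by blast
  then show "Poly_Mapping.keys m \<subseteq> V" using P Q by (auto simp: keys_add_nat)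
qed
lemma vars_one [simp]: "mpoly_vars_in V 1" unfolding mpoly_vars_in_def by simp
lemma vars_power: "mpoly_vars_in V P \<Longrightarrow> mpoly_vars_in V (P ^ n)"
  by (induction n) (simp_all add: vars_mult)
lemma vars_mvar: "i \<in> V \<Longrightarrow> mpoly_vars_in V (mvar i)"
  unfolding mpoly_vars_in_def mvar_def by simp
lemma vars_single: "Poly_Mapping.keys m \<subseteq> V \<Longrightarrow> mpoly_vars_in V (Poly_Mapping.single m c)"
  unfolding mpoly_vars_in_def by simp
lemma vars_sum: "finite S \<Longrightarrow> (\<And>s. s \<in> S \<Longrightarrow> mpoly_vars_in V (f s)) \<Longrightarrow> mpoly_vars_in V (sum f S)"
  by (induction S rule: finite_induct) (simp_all add: vars_add)


definition alg_closed_field :: "'k::field itself \<Rightarrow> bool" where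
  "alg_closed_field _ \<longleftrightarrow> (\<forall>p :: 'k poly. degree p \<noteq> 0 \<longrightarrow> (\<exists>z. poly p z = 0))"

lemma alg_closed_infinite:
  assumes "alg_closed_field TYPE('k::field)"
  shows "infinite (UNIV :: 'k set)"
proof
  assume fin: "finite (UNIV :: 'k set)"
  define q :: "'k poly" where "q = (\<Prod>a\<in>UNIV. [:-a, 1:])"
  have dq: "degree q = card (UNIV :: 'k set)"
    unfolding q_def by (subst degree_prod_eq_sum_degree) (auto simp: fin)
  have "card (UNIV :: 'k set) \<noteq> 0" using fin by simp
  then have dq1: "degree q \<noteq> 0" using dq by simp
  have "degree (q + 1) = degree q"
    using dq1 by (simp add: degree_add_eq_left)
  then obtain z where "poly (q + 1) z = 0"
    using assms dq1 unfolding alg_closed_field_def by metis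
  moreover have "poly q z = 0"
    unfolding q_def poly_prod by (rule prod_zero) (use fin in auto)
  ultimately show False by simp
qed

lemma poly_zero_on_infinite:
  fixes p :: "'k::field poly"
  assumes "infinite D" "\<forall>t\<in>D. poly p t = 0"
  shows "p = 0"
proof (rule ccontr)
  assume "p \<noteq> 0"
  then have "finite {x. poly p x = 0}" by (rule poly_roots_finite)
  moreover have "D \<subseteq> {x. poly p x = 0}" using assms(2) by auto
  ultimately show False using assms(1) finite_subset by blast
qed

lemma coeffs_zero_on_infinite:
  fixes a :: "nat \<Rightarrow> 'k::field"
  assumes "infinite D" "\<forall>t\<in>D. (\<Sum>k\<le>N. a k * t ^ k) = 0" "k \<le> N"
  shows "a k = 0"
proof -
  define p where "p = (\<Sum>k\<le>N. monom (a k) k)"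
  have "\<forall>t\<in>D. poly p t = 0" using assms(2) unfolding p_def by (simp add: poly_sum poly_monom)
  then have "p = 0" using poly_zero_on_infinite[OF assms(1)] by blast
  then have "coeff p k = 0" by simp
  moreover have "coeff p k = a k"
    unfolding p_def coeff_sum coeff_monom using assms(3) by (simp add: when_def)
  ultimately show ?thesis by simp
qed

lemma regroup_pow:
  fixes F :: "'e \<Rightarrow> 'k::comm_ring_1"
  assumes "finite S" "\<forall>e\<in>S. h e \<le> N"
  shows "(\<Sum>e\<in>S. F e * t ^ h e) = (\<Sum>k\<le>N. (\<Sum>e\<in>{e\<in>S. h e = k}. F e) * t ^ k)"
proof -
  have "(\<Sum>k\<le>N. (\<Sum>e\<in>{e\<in>S. h e = k}. F e) * t ^ k) = (\<Sum>k\<le>N. \<Sum>e\<in>S. if h e = k then F e * t ^ k else 0)"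
    using assms(1) by (intro sum.cong refl) (simp add: sum_distrib_right sum.inter_filter[symmetric])
  also have "\<dots> = (\<Sum>e\<in>S. \<Sum>k\<le>N. if h e = k then F e * t ^ k else 0)"
    by (rule sum.swap)
  also have "\<dots> = (\<Sum>e\<in>S. F e * t ^ h e)"
    using assms(2) by (intro sum.cong refl) (simp add: sum.delta' eq_commute[of "h _"])
  finally show ?thesis by simp
qed

lemma mID:
  fixes a :: "(nat \<Rightarrow> nat) \<Rightarrow> 'k::field"
  assumes D: "infinite D"
  shows "finite S \<Longrightarrow> (\<forall>e\<in>S. \<forall>e'\<in>S. (\<forall>i<n. e i = e' i) \<longrightarrow> e = e') \<Longrightarrow>
    (\<forall>z. (\<forall>i<n. z i \<in> D) \<longrightarrow> (\<Sum>e\<in>S. a e * (\<Prod>i<n. z i ^ e i)) = 0) \<Longrightarrow> \<forall>e\<in>S. a e = 0"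
proof (induction n arbitrary: S)
  case 0
  show ?case
  proof
    fix e assume e: "e \<in> S"
    then have "S = {e}" using "0.prems"(2) by auto
    then show "a e = 0" using "0.prems"(3) by simp
  qed
next
  case (Suc n)
  show ?case
  proof
    fix e0 assume e0: "e0 \<in> S"
    define S0 where "S0 = {e\<in>S. e n = e0 n}"
    have fin0: "finite S0" using Suc.prems(1) unfolding S0_def by simp
    have inj0: "\<forall>e\<in>S0. \<forall>e'\<in>S0. (\<forall>i<n. e i = e' i) \<longrightarrow> e = e'"
      using Suc.prems(2) unfolding S0_def by (metis (mono_tags, lifting) less_Suc_eq mem_Collect_eq)
    define N where "N = Max ((\<lambda>e. e n) ` S)"
    have hN: "\<forall>e\<in>S. e n \<le> N" unfolding N_def using Suc.prems(1) by simp
    have vanish0: "\<forall>z. (\<forall>i<n. z i \<in> D) \<longrightarrow> (\<Sum>e\<in>S0. a e * (\<Prod>i<n. z i ^ e i)) = 0"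
    proof (intro allI impI)
      fix z :: "nat \<Rightarrow> 'k" assume z: "\<forall>i<n. z i \<in> D"
      define F where "F e = a e * (\<Prod>i<n. z i ^ e i)" for e
      have "\<forall>t\<in>D. (\<Sum>k\<le>N. (\<Sum>e\<in>{e\<in>S. e n = k}. F e) * t ^ k) = 0"
      proof
        fix t assume t: "t \<in> D"
        define z' where "z' = z(n := t)"
        have "\<forall>i<Suc n. z' i \<in> D" using z t unfolding z'_def by (auto simp: less_Suc_eq)
        then have "(\<Sum>e\<in>S. a e * (\<Prod>i<Suc n. z' i ^ e i)) = 0" using Suc.prems(3) by blast
        moreover have "(\<Prod>i<Suc n. z' i ^ e i) = (\<Prod>i<n. z i ^ e i) * t ^ e n" for e
          unfolding z'_def by (simp add: prod.lessThan_Suc)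
        ultimately have "(\<Sum>e\<in>S. F e * t ^ e n) = 0"
          unfolding F_def by (simp add: mult.assoc)
        then show "(\<Sum>k\<le>N. (\<Sum>e\<in>{e\<in>S. e n = k}. F e) * t ^ k) = 0"
          using regroup_pow[OF Suc.prems(1) hN, of F t] by simp
      qed
      from coeffs_zero_on_infinite[OF D this, of "e0 n"] hN e0
      show "(\<Sum>e\<in>S0. a e * (\<Prod>i<n. z i ^ e i)) = 0" unfolding S0_def F_def by simp
    qed
    have "\<forall>e\<in>S0. a e = 0" by (rule Suc.IH[OF fin0 inj0 vanish0])
    then show "a e0 = 0" using e0 unfolding S0_def by simp
  qed
qed


lemma pf_diff: "f \<in> poly_fun \<Longrightarrow> g \<in> poly_fun \<Longrightarrow> (\<lambda>x. f x - g x) \<in> poly_fun"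
proof -
  assume f: "f \<in> poly_fun" and g: "g \<in> poly_fun"
  have "(\<lambda>x. f x + (\<lambda>x. -1) x * g x) \<in> poly_fun"
    by (intro pf_add f pf_mult g pf_const)
  then show ?thesis by simp
qed

lemma pf_pow: "f \<in> poly_fun \<Longrightarrow> (\<lambda>x. f x ^ n) \<in> poly_fun"
proof (induction n)
  case 0 then show ?case using pf_const[of 1] by simp
next
  case (Suc n)
  then have "(\<lambda>x. f x * f x ^ n) \<in> poly_fun" by (intro pf_mult) auto
  then show ?case by simp
qed

lemma pf_sum: "finite S \<Longrightarrow> (\<And>s. s \<in> S \<Longrightarrow> f s \<in> poly_fun) \<Longrightarrow> (\<lambda>x. \<Sum>s\<in>S. f s x) \<in> poly_fun"
proof (induction S rule: finite_induct)
  case empty then show ?case using pf_const[of 0] by simp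
next
  case (insert a S)
  then have "(\<lambda>x. f a x + (\<Sum>s\<in>S. f s x)) \<in> poly_fun" by (intro pf_add) auto
  then show ?case using insert by simp
qed

lemma pf_eta: "f \<in> poly_fun \<Longrightarrow> (\<lambda>x. f x) \<in> poly_fun" by simp

lemmas pf_intros = pf_const pf_coord pf_add pf_mult pf_diff pf_pow

lemma pf_xi31: "xi 3 1 \<in> poly_fun"
proof -
  have eq: "xi 3 1 = (\<lambda>x::'k^3^3. x$3$1)" by (rule ext) simp
  show ?thesis unfolding eq by (rule pf_coord)
qed

lemma pf_m13: "(minor 1 3 :: 'k::comm_ring_1^3^3 \<Rightarrow> 'k) \<in> poly_fun"
proof -
  have eq: "minor 1 3 = (\<lambda>x::'k^3^3. x$2$1 * x$3$2 - x$2$2 * x$3$1)" by (rule ext) (simp add: minor_simps minor_simps')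
  show ?thesis unfolding eq by (intro pf_intros)
qed

lemma pf_s1: "(s1 :: 'k::comm_ring_1^3^3 \<Rightarrow> 'k) \<in> poly_fun"
proof -
  have eq: "s1 = (\<lambda>x::'k^3^3. x$1$1 + x$2$2 + x$3$3)" by (rule ext) (simp add: s1_simp)
  show ?thesis unfolding eq by (intro pf_intros)
qed
lemma pf_s2: "(s2 :: 'k::comm_ring_1^3^3 \<Rightarrow> 'k) \<in> poly_fun"
proof -
  have eq: "s2 = (\<lambda>x::'k^3^3. (x$2$2 * x$3$3 - x$2$3 * x$3$2) + (x$1$1 * x$3$3 - x$1$3 * x$3$1) + (x$1$1 * x$2$2 - x$1$2 * x$2$1))"
    by (rule ext) (simp add: s2_simp)
  show ?thesis unfolding eq by (intro pf_intros)
qed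
lemma pf_s3: "(s3 :: 'k::comm_ring_1^3^3 \<Rightarrow> 'k) \<in> poly_fun"
proof -
  have eq: "s3 = (\<lambda>x::'k^3^3. x$1$1 * x$2$2 * x$3$3 +
    x$1$2 * x$2$3 * x$3$1 +
    x$1$3 * x$2$1 * x$3$2 -
    x$1$1 * x$2$3 * x$3$2 -
    x$1$2 * x$2$1 * x$3$3 -
    x$1$3 * x$2$2 * x$3$1)"
    by (rule ext) (simp add: s3_simp)
  show ?thesis unfolding eq by (intro pf_intros)
qed
lemma pf_d1: "(d1 :: 'k::comm_ring_1^3^3 \<Rightarrow> 'k) \<in> poly_fun"
proof -
  have eq: "d1 = (\<lambda>x::'k^3^3. x$2$1 * (x$2$1 * x$3$2 - x$2$2 * x$3$1) + x$3$1 * (x$2$1 * x$3$3 - x$2$3 * x$3$1))"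
    by (rule ext) (simp add: d1_simp)
  show ?thesis unfolding eq by (intro pf_intros)
qed
lemma pf_d2: "(d2 :: 'k::comm_ring_1^3^3 \<Rightarrow> 'k) \<in> poly_fun"
proof -
  have eq: "d2 = (\<lambda>x::'k^3^3. x$3$1 * (x$1$1 * x$3$2 - x$1$2 * x$3$1) + x$3$2 * (x$2$1 * x$3$2 - x$2$2 * x$3$1))"
    by (rule ext) (simp add: d2_simp)
  show ?thesis unfolding eq by (intro pf_intros)
qed

lemma pf_line:
  fixes f :: "'k::comm_ring_1^3^3 \<Rightarrow> 'k"
  assumes "f \<in> poly_fun"
  shows "\<exists>p. \<forall>t. f (\<chi> i j. a$i$j + t * b$i$j) = poly p t"
  using assms
proof (induction rule: poly_fun.induct)
  case (pf_const c) then show ?case by (intro exI[of _ "[:c:]"]) simp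
next
  case (pf_coord i j)
  have "\<forall>t. (\<chi> i j. a$i$j + t * b$i$j) $ i $ j = poly [:a$i$j, b$i$j:] t" by (simp add: mult.commute)
  then show ?case by blast
next
  case (pf_add f g)
  then obtain p q where "\<forall>t. f (\<chi> i j. a$i$j + t * b$i$j) = poly p t" "\<forall>t. g (\<chi> i j. a$i$j + t * b$i$j) = poly q t"
    by blast
  then have "\<forall>t. f (\<chi> i j. a$i$j + t * b$i$j) + g (\<chi> i j. a$i$j + t * b$i$j) = poly (p + q) t" by simp
  then show ?case by blast
next
  case (pf_mult f g)
  then obtain p q where "\<forall>t. f (\<chi> i j. a$i$j + t * b$i$j) = poly p t" "\<forall>t. g (\<chi> i j. a$i$j + t * b$i$j) = poly q t"
    by blast
  then have "\<forall>t. f (\<chi> i j. a$i$j + t * b$i$j) * g (\<chi> i j. a$i$j + t * b$i$j) = poly (p * q) t" by simp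
  then show ?case by blast
qed

lemma pf_domain:
  fixes f g :: "'k::field^3^3 \<Rightarrow> 'k"
  assumes inf: "infinite (UNIV :: 'k set)"
    and f: "f \<in> poly_fun" and g: "g \<in> poly_fun" and fg: "\<forall>x. f x * g x = 0" and x0: "g x0 \<noteq> 0"
  shows "f = (\<lambda>x. 0)"
proof
  fix x
  define L where "L t = (\<chi> i j. x0$i$j + t * (x$i$j - x0$i$j))" for t
  obtain p where p: "\<forall>t. f (L t) = poly p t"
    using pf_line[OF f, of x0 "\<chi> i j. x$i$j - x0$i$j"] unfolding L_def by auto
  obtain q where q: "\<forall>t. g (L t) = poly q t"
    using pf_line[OF g, of x0 "\<chi> i j. x$i$j - x0$i$j"] unfolding L_def by auto
  have "\<forall>t\<in>UNIV. poly (p * q) t = 0"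
  proof
    fix t
    have "poly (p * q) t = f (L t) * g (L t)" using p q by simp
    then show "poly (p * q) t = 0" using fg by simp
  qed
  then have pq: "p * q = 0" by (rule poly_zero_on_infinite[OF inf])
  have L0: "L 0 = x0" unfolding L_def by (simp add: vec_eq_iff)
  have L1: "L 1 = x" unfolding L_def by (simp add: vec_eq_iff)
  have "poly q 0 = g x0" using q[rule_format, of 0] L0 by simp
  then have "q \<noteq> 0" using x0 by auto
  then have "p = 0" using pq by simp
  then show "f x = 0" using p L1 by (metis poly_0)
qed

definition e31 :: "'k::{zero,one}^3^3" where "e31 = (\<chi> i j. if i = 3 \<and> j = 1 then 1 else 0)"
lemma e31_31: "(e31 :: 'k::{zero_neq_one}^3^3)$3$1 = 1" unfolding e31_def by simp

lemma pf_cancel31: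
  fixes f :: "'k::field^3^3 \<Rightarrow> 'k"
  assumes inf: "infinite (UNIV :: 'k set)" and f: "f \<in> poly_fun"
    and van: "\<forall>x. x$3$1 \<noteq> 0 \<longrightarrow> f x = 0"
  shows "f = (\<lambda>x. 0)"
proof (rule pf_domain[OF inf f])
  show "(\<lambda>x. x$3$1) \<in> poly_fun" by (rule pf_coord)
  show "\<forall>x. f x * x $ 3 $ 1 = 0" using van by auto
  show "(e31::'k^3^3) $ 3 $ 1 \<noteq> 0" by (simp add: e31_31)
qed

lemma cubic_roots:
  assumes "alg_closed_field TYPE('k::field)"
  shows "\<exists>u v w::'k. u + v + w = E1 \<and> u * v + v * w + u * w = E2 \<and> u * v * w = E3"
proof -
  have "degree [:-E3, E2, -E1, 1::'k:] = 3" by simp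
  then obtain u where u: "poly [:-E3, E2, -E1, 1::'k:] u = 0"
    using assms unfolding alg_closed_field_def by (metis zero_neq_numeral)
  have "degree [:E2 - u  *  E1 + u * u, u - E1, 1::'k:] = 2" by simp
  then obtain v where v: "poly [:E2 - u  *  E1 + u * u, u - E1, 1::'k:] v = 0"
    using assms unfolding alg_closed_field_def by (metis zero_neq_numeral)
  define w where "w = E1 - u - v"
  have u': "u * u * u - E1 * u * u + E2 * u - E3 = 0" using u by (simp add: algebra_simps)
  have v': "v * v + (u - E1) * v + (E2 - u * E1 + u * u) = 0" using v by (simp add: algebra_simps)
  have 1: "u + v + w = E1" unfolding w_def by simp
  have 2: "u * v + v * w + u * w = E2"
  proof -
    have "u * v + v * w + u * w - E2 = -(v * v + (u - E1) * v + (E2 - u * E1 + u * u))"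
      unfolding w_def by (simp add: algebra_simps)
    then show ?thesis using v' by simp
  qed
  have 3: "u * v * w = E3"
  proof -
    have "u * v * w - E3 = -u * (v * v + (u - E1) * v + (E2 - u * E1 + u * u)) + (u * u * u - E1 * u * u + E2 * u - E3)"
      unfolding w_def by (simp add: algebra_simps)
    then show ?thesis using u' v' by simp
  qed
  show ?thesis using 1 2 3 by blast
qed


definition G7 :: "nat \<Rightarrow> 'k::field^3^3 \<Rightarrow> 'k" where
  "G7 = (\<lambda>i::nat. [s1, s2, s3, xi 3 1, minor 1 3, d1, d2] ! i)"

lemma G7_simps [simp]:
  "G7 0 = s1" "G7 1 = s2" "G7 2 = s3" "G7 3 = xi 3 1" "G7 4 = minor 1 3" "G7 5 = d1" "G7 6 = d2"
  by (simp_all add: G7_def numeral_eq_Suc)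
lemmas G7_simps' [simp] = G7_simps[unfolded One_nat_def]

definition Rp :: "'k::field mpoly" where
  "Rp = mvar 5 * mvar 6 - mvar 4 ^ 3 - mvar 3 * mvar 4 ^ 2 * mvar 0 - mvar 3 ^ 2 * mvar 4 * mvar 1 - mvar 3 ^ 3 * mvar 2"

lemma ev_Rp: "mpoly_eval (Rp::'k::field mpoly) G7 x = 0"
  unfolding Rp_def eval_diff eval_mult eval_power eval_mvar G7_simps by (rule relation_holds)

lemma vars_Rp: "mpoly_vars_in {0..<7} (Rp::'k::field mpoly)"
  unfolding Rp_def by (intro vars_diff vars_mult vars_power vars_mvar; simp)

lemma mvar_power: "mvar i ^ k = Poly_Mapping.single (Poly_Mapping.single i k) (1::'k::comm_ring_1)"
proof (induction k)
  case 0 then show ?case by simp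
next
  case (Suc k)
  have "mvar i ^ Suc k = mvar i ^ k * mvar i" by (rule power_Suc2)
  also have "\<dots> = Poly_Mapping.single (Poly_Mapping.single i k) (1::'k) * Poly_Mapping.single (Poly_Mapping.single i 1) 1"
    by (subst Suc.IH) (simp only: mvar_def)
  also have "\<dots> = Poly_Mapping.single (Poly_Mapping.single i k + Poly_Mapping.single i 1) 1"
    by (simp only: mult_single mult_1)
  also have "\<dots> = Poly_Mapping.single (Poly_Mapping.single i (Suc k)) 1"
    by (simp only: single_add[symmetric] Suc_eq_plus1)
  finally show ?case .
qed

definition reduced :: "'k::zero mpoly \<Rightarrow> bool" where
  "reduced P \<longleftrightarrow> (\<forall>m\<in>Poly_Mapping.keys P. Poly_Mapping.lookup m 5 = 0 \<or> Poly_Mapping.lookup m 6 = 0)"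

lemma reduced_add:
  assumes P: "reduced P" and Q: "reduced Q" shows "reduced (P + Q)"
  unfolding reduced_def
proof (rule ballI)
  fix m assume m: "m \<in> Poly_Mapping.keys (P + Q)"
  have "Poly_Mapping.keys (P + Q) \<subseteq> Poly_Mapping.keys P \<union> Poly_Mapping.keys Q" by (rule keys_add)
  with m have "m \<in> Poly_Mapping.keys P \<or> m \<in> Poly_Mapping.keys Q" by blast
  then show "Poly_Mapping.lookup m 5 = 0 \<or> Poly_Mapping.lookup m 6 = 0"
    using bspec[OF P[unfolded reduced_def]] bspec[OF Q[unfolded reduced_def]] by metis
qed
lemma reduced_zero [simp]: "reduced 0" unfolding reduced_def by simp
lemma reduced_sum: "finite S \<Longrightarrow> (\<And>s. s \<in> S \<Longrightarrow> reduced (f s)) \<Longrightarrow> reduced (sum f S)"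
proof (induction S rule: finite_induct)
  case empty then show ?case by simp
next
  case (insert a S)
  then have "reduced (f a + sum f S)" by (intro reduced_add) auto
  then show ?case using insert(1,2) by simp
qed

lemma reduced_single: "Poly_Mapping.lookup m 5 = 0 \<or> Poly_Mapping.lookup m 6 = 0 \<Longrightarrow> reduced (Poly_Mapping.single m c)"
  unfolding reduced_def by simp

abbreviation sg :: "nat \<Rightarrow> nat \<Rightarrow> nat \<Rightarrow>\<^sub>0 nat" where "sg \<equiv> Poly_Mapping.single"

lemma mvar_mult_sg: "Poly_Mapping.single a (1::'k::comm_ring_1) * Poly_Mapping.single b 1 = Poly_Mapping.single (a + b) 1"
  by (simp add: mult_single)

definition Tp :: "'k::field mpoly" where
  "Tp = mvar 4 ^ 3 + mvar 3 * mvar 4 ^ 2 * mvar 0 + mvar 3 ^ 2 * mvar 4 * mvar 1 + mvar 3 ^ 3 * mvar 2"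

lemma Rp_Tp: "(Rp::'k::field mpoly) = mvar 5 * mvar 6 - Tp"
  unfolding Rp_def Tp_def by (simp add: algebra_simps)

lemma Tp_single: "(Tp::'k::field mpoly) = Poly_Mapping.single (sg 4 3) 1 + Poly_Mapping.single (sg 3 1 + sg 4 2 + sg 0 1) 1
   + Poly_Mapping.single (sg 3 2 + sg 4 1 + sg 1 1) 1 + Poly_Mapping.single (sg 3 3 + sg 2 1) 1"
  unfolding Tp_def mvar_power by (simp only: mvar_def mvar_mult_sg)

lemma Y56: "mvar 5 * mvar 6 = Poly_Mapping.single (sg 5 1 + sg 6 1) (1::'k::comm_ring_1)"
  unfolding mvar_def by (rule mvar_mult_sg)

lemma red_mono:
  fixes c :: "'k::field"
  shows "Poly_Mapping.keys m \<subseteq> {0..<7} \<Longrightarrow> \<exists>Q B. Poly_Mapping.single m c = Q * Rp + B \<and>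
     mpoly_vars_in {0..<7} Q \<and> mpoly_vars_in {0..<7} B \<and> reduced B"
proof (induction "Poly_Mapping.lookup m 5" arbitrary: m c rule: less_induct)
  case less
  show ?case
  proof (cases "Poly_Mapping.lookup m 5 = 0 \<or> Poly_Mapping.lookup m 6 = 0")
    case True
    then show ?thesis
      by (intro exI[of _ 0] exI[of _ "Poly_Mapping.single m c"]) (simp add: reduced_single vars_single less.prems)
  next
    case False
    define m' where "m' = m - (sg 5 1 + sg 6 1)"
    have mm': "m = m' + (sg 5 1 + sg 6 1)"
      unfolding m'_def using False
      by (intro poly_mapping_eqI) (auto simp: lookup_add lookup_minus lookup_single when_def)
    have l5: "Poly_Mapping.lookup m' 5 < Poly_Mapping.lookup m 5"
      using False unfolding m'_def by (simp add: lookup_minus lookup_add lookup_single)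
    have km': "Poly_Mapping.keys m' \<subseteq> {0..<7}"
      using less.prems unfolding m'_def by (auto simp: in_keys_iff lookup_minus lookup_add lookup_single when_def)
    have sm: "Poly_Mapping.single m c = Poly_Mapping.single m' c * Rp + Poly_Mapping.single m' c * Tp"
    proof -
      have "Poly_Mapping.single m c = Poly_Mapping.single m' c * (mvar 5 * mvar 6)"
        unfolding Y56 mult_single mm' by simp
      then show ?thesis unfolding Rp_Tp by (simp add: algebra_simps)
    qed
    have st: "Poly_Mapping.single m' c * Tp = Poly_Mapping.single (m' + sg 4 3) c + Poly_Mapping.single (m' + (sg 3 1 + sg 4 2 + sg 0 1)) c
      + Poly_Mapping.single (m' + (sg 3 2 + sg 4 1 + sg 1 1)) c + Poly_Mapping.single (m' + (sg 3 3 + sg 2 1)) c"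
      unfolding Tp_single by (simp add: distrib_left mult_single)
    have IH: "\<exists>Q B. Poly_Mapping.single (m' + t) c = Q * Rp + B \<and>
       mpoly_vars_in {0..<7} Q \<and> mpoly_vars_in {0..<7} B \<and> reduced B"
      if "Poly_Mapping.lookup t 5 = 0" "Poly_Mapping.keys t \<subseteq> {0..<7}" for t
    proof (rule less.hyps)
      show "Poly_Mapping.lookup (m' + t) 5 < Poly_Mapping.lookup m 5" using l5 that(1) by (simp add: lookup_add)
      show "Poly_Mapping.keys (m' + t) \<subseteq> {0..<7}" using km' that(2) by (simp add: keys_add_nat)
    qed
    obtain Q1 B1 where 1: "Poly_Mapping.single (m' + sg 4 3) c = Q1 * Rp + B1" "mpoly_vars_in {0..<7} Q1" "mpoly_vars_in {0..<7} B1" "reduced B1"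
      using IH[of "sg 4 3"] by (auto simp: lookup_single)
    obtain Q2 B2 where 2: "Poly_Mapping.single (m' + (sg 3 1 + sg 4 2 + sg 0 1)) c = Q2 * Rp + B2" "mpoly_vars_in {0..<7} Q2" "mpoly_vars_in {0..<7} B2" "reduced B2"
      using IH[of "sg 3 1 + sg 4 2 + sg 0 1"] by (auto simp: lookup_single lookup_add keys_add_nat)
    obtain Q3 B3 where 3: "Poly_Mapping.single (m' + (sg 3 2 + sg 4 1 + sg 1 1)) c = Q3 * Rp + B3" "mpoly_vars_in {0..<7} Q3" "mpoly_vars_in {0..<7} B3" "reduced B3"
      using IH[of "sg 3 2 + sg 4 1 + sg 1 1"] by (auto simp: lookup_single lookup_add keys_add_nat)
    obtain Q4 B4 where 4: "Poly_Mapping.single (m' + (sg 3 3 + sg 2 1)) c = Q4 * Rp + B4" "mpoly_vars_in {0..<7} Q4" "mpoly_vars_in {0..<7} B4" "reduced B4"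
      using IH[of "sg 3 3 + sg 2 1"] by (auto simp: lookup_single lookup_add keys_add_nat)
    have "Poly_Mapping.single m c = (Poly_Mapping.single m' c + Q1 + Q2 + Q3 + Q4) * Rp + (B1 + B2 + B3 + B4)"
      unfolding sm st 1(1) 2(1) 3(1) 4(1) by (simp add: algebra_simps)
    moreover have "mpoly_vars_in {0..<7} (Poly_Mapping.single m' c + Q1 + Q2 + Q3 + Q4)"
      using km' 1 2 3 4 by (intro vars_add vars_single) auto
    moreover have "mpoly_vars_in {0..<7} (B1 + B2 + B3 + B4)"
      using 1 2 3 4 by (intro vars_add) auto
    moreover have "reduced (B1 + B2 + B3 + B4)"
      using 1 2 3 4 by (intro reduced_add) auto
    ultimately show ?thesis by blast
  qed
qed

lemma red_exists:
  fixes P :: "'k::field mpoly"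
  assumes "mpoly_vars_in {0..<7} P"
  shows "\<exists>Q B. P = Q * Rp + B \<and> mpoly_vars_in {0..<7} Q \<and> mpoly_vars_in {0..<7} B \<and> reduced B"
proof -
  have "\<forall>m\<in>Poly_Mapping.keys P. \<exists>QB. Poly_Mapping.single m (Poly_Mapping.lookup P m) = fst QB * Rp + snd QB \<and>
     mpoly_vars_in {0..<7} (fst QB) \<and> mpoly_vars_in {0..<7} (snd QB) \<and> reduced (snd QB)"
  proof
    fix m assume "m \<in> Poly_Mapping.keys P"
    then have "Poly_Mapping.keys m \<subseteq> {0..<7}" using assms unfolding mpoly_vars_in_def by auto
    from red_mono[OF this, of "Poly_Mapping.lookup P m"] show "\<exists>QB. Poly_Mapping.single m (Poly_Mapping.lookup P m) = fst QB * Rp + snd QB \<and>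
     mpoly_vars_in {0..<7} (fst QB) \<and> mpoly_vars_in {0..<7} (snd QB) \<and> reduced (snd QB)"
      by (metis fst_conv snd_conv)
  qed
  then obtain F where F: "\<forall>m\<in>Poly_Mapping.keys P. Poly_Mapping.single m (Poly_Mapping.lookup P m) = fst (F m) * Rp + snd (F m) \<and>
     mpoly_vars_in {0..<7} (fst (F m)) \<and> mpoly_vars_in {0..<7} (snd (F m)) \<and> reduced (snd (F m))"
    by (rule bchoice[elim_format]) blast
  have "P = (\<Sum>m\<in>Poly_Mapping.keys P. Poly_Mapping.single m (Poly_Mapping.lookup P m))"
    by (rule poly_mapping_sum_single)
  also have "\<dots> = (\<Sum>m\<in>Poly_Mapping.keys P. fst (F m) * Rp + snd (F m))"
    using F by (intro sum.cong) auto
  also have "\<dots> = (\<Sum>m\<in>Poly_Mapping.keys P. fst (F m)) * Rp + (\<Sum>m\<in>Poly_Mapping.keys P. snd (F m))"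
    by (simp add: sum.distrib sum_distrib_right)
  finally have eq: "P = (\<Sum>m\<in>Poly_Mapping.keys P. fst (F m)) * Rp + (\<Sum>m\<in>Poly_Mapping.keys P. snd (F m))" .
  have v1: "mpoly_vars_in {0..<7} (\<Sum>m\<in>Poly_Mapping.keys P. fst (F m))"
    by (rule vars_sum) (use F in auto)
  have v2: "mpoly_vars_in {0..<7} (\<Sum>m\<in>Poly_Mapping.keys P. snd (F m))"
    by (rule vars_sum) (use F in auto)
  have r: "reduced (\<Sum>m\<in>Poly_Mapping.keys P. snd (F m))"
    by (rule reduced_sum) (use F in auto)
  show ?thesis using eq v1 v2 r by blast
qed


definition Tm :: "'k::field \<Rightarrow> 'k \<Rightarrow> 'k \<Rightarrow> 'k \<Rightarrow> 'k \<Rightarrow> 'k^3^3" where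
  "Tm u v w a b = mk3 u 0 0 a v 0 0 b w"

lemma G7_Tm:
  "s1 (Tm u v w a b) = u + v + w" "s2 (Tm u v w a b) = u * v + v * w + u * w" "s3 (Tm u v w a b) = u * v * w"
  "xi 3 1 (Tm u v w a b) = 0" "minor 1 3 (Tm u v w a b) = a * b" "d1 (Tm u v w a b) = a^2 * b" "d2 (Tm u v w a b) = a * b^2"
  unfolding Tm_def by (simp_all add: gen_simps algebra_simps power2_eq_square)

definition psi :: "(nat \<Rightarrow>\<^sub>0 nat) \<Rightarrow> nat \<Rightarrow> nat" where
  "psi m i = (if i = 0 then Poly_Mapping.lookup m 0 else if i = 1 then Poly_Mapping.lookup m 1
     else if i = 2 then Poly_Mapping.lookup m 2
     else if i = 3 then Poly_Mapping.lookup m 4 + 2 * Poly_Mapping.lookup m 5 + Poly_Mapping.lookup m 6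
     else if i = 4 then Poly_Mapping.lookup m 4 + Poly_Mapping.lookup m 5 + 2 * Poly_Mapping.lookup m 6 else 0)"

lemma lt7: "{..<7::nat} = {0,1,2,3,4,5,6}" by auto
lemma lt5: "{..<5::nat} = {0,1,2,3,4}" by auto

lemma mon_Tm:
  fixes u v w a b :: "'k::field"
  assumes "Poly_Mapping.keys m \<subseteq> {0..<7}" "Poly_Mapping.lookup m 3 = 0"
  shows "mon G7 m (Tm u v w a b) = (\<Prod>i<5. (\<lambda>i. if i = 0 then u + v + w else if i = 1 then u * v + v * w + u * w
      else if i = 2 then u * v * w else if i = 3 then a else b) i ^ psi m i)"
proof -
  have "mon G7 m (Tm u v w a b) = (\<Prod>i<7. G7 i (Tm u v w a b) ^ Poly_Mapping.lookup m i)"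
    by (rule mon_superset) (use assms(1) in auto)
  also have "\<dots> = (u + v + w) ^ Poly_Mapping.lookup m 0 * (u * v + v * w + u * w) ^ Poly_Mapping.lookup m 1 *
     (u * v * w) ^ Poly_Mapping.lookup m 2 * ((a * b) ^ Poly_Mapping.lookup m 4 * (a^2 * b) ^ Poly_Mapping.lookup m 5 *
     (a * b^2) ^ Poly_Mapping.lookup m 6)"
    unfolding lt7 using assms(2) by (simp add: G7_Tm G7_Tm[unfolded One_nat_def] mult.assoc)
  also have "(a * b) ^ Poly_Mapping.lookup m 4 * (a^2 * b) ^ Poly_Mapping.lookup m 5 * (a * b^2) ^ Poly_Mapping.lookup m 6
     = a ^ (Poly_Mapping.lookup m 4 + 2 * Poly_Mapping.lookup m 5 + Poly_Mapping.lookup m 6) *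
       b ^ (Poly_Mapping.lookup m 4 + Poly_Mapping.lookup m 5 + 2 * Poly_Mapping.lookup m 6)"
    by (simp add: power_add power_mult_distrib power_mult[symmetric] mult_ac)
  finally show ?thesis unfolding lt5 by (simp add: psi_def mult.assoc)
qed

lemma test_zero:
  fixes B :: "'k::field mpoly"
  assumes ac: "alg_closed_field TYPE('k)"
    and vars: "mpoly_vars_in {0..<7} B" and red: "reduced B"
    and no3: "\<forall>m\<in>Poly_Mapping.keys B. Poly_Mapping.lookup m 3 = 0"
    and van: "\<forall>u v w a b. mpoly_eval B G7 (Tm u v w a b) = 0"
  shows "B = 0"
proof -
  define K where "K = Poly_Mapping.keys B"
  have Kf: "finite K" unfolding K_def by simp
  have inj: "inj_on psi K"
  proof (rule inj_onI)
    fix m m' assume m: "m \<in> K" and m': "m' \<in> K" and eq: "psi m = psi m'"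
    have e: "psi m i = psi m' i" for i using eq by simp
    have r: "Poly_Mapping.lookup m 5 = 0 \<or> Poly_Mapping.lookup m 6 = 0"
            "Poly_Mapping.lookup m' 5 = 0 \<or> Poly_Mapping.lookup m' 6 = 0"
      using red m m' unfolding reduced_def K_def by auto
    have z3: "Poly_Mapping.lookup m 3 = 0" "Poly_Mapping.lookup m' 3 = 0" using no3 m m' unfolding K_def by auto
    have k: "Poly_Mapping.keys m \<subseteq> {0..<7}" "Poly_Mapping.keys m' \<subseteq> {0..<7}"
      using vars m m' unfolding mpoly_vars_in_def K_def by auto
    have e0: "Poly_Mapping.lookup m 0 = Poly_Mapping.lookup m' 0" using e[of 0] by (simp add: psi_def)
    have e1: "Poly_Mapping.lookup m 1 = Poly_Mapping.lookup m' 1" using e[of 1] by (simp add: psi_def)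
    have e2: "Poly_Mapping.lookup m 2 = Poly_Mapping.lookup m' 2" using e[of 2] by (simp add: psi_def)
    have e3: "Poly_Mapping.lookup m 4 + 2 * Poly_Mapping.lookup m 5 + Poly_Mapping.lookup m 6 =
              Poly_Mapping.lookup m' 4 + 2 * Poly_Mapping.lookup m' 5 + Poly_Mapping.lookup m' 6"
      using e[of 3] by (simp add: psi_def)
    have e4: "Poly_Mapping.lookup m 4 + Poly_Mapping.lookup m 5 + 2 * Poly_Mapping.lookup m 6 =
              Poly_Mapping.lookup m' 4 + Poly_Mapping.lookup m' 5 + 2 * Poly_Mapping.lookup m' 6"
      using e[of 4] by (simp add: psi_def)
    have e456: "Poly_Mapping.lookup m 4 = Poly_Mapping.lookup m' 4 \<and> Poly_Mapping.lookup m 5 = Poly_Mapping.lookup m' 5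
       \<and> Poly_Mapping.lookup m 6 = Poly_Mapping.lookup m' 6"
      using r e3 e4 by linarith
    show "m = m'"
    proof (rule poly_mapping_eqI)
      fix i
      show "Poly_Mapping.lookup m i = Poly_Mapping.lookup m' i"
      proof (cases "i < 7")
        case True
        then have "i = 0 \<or> i = 1 \<or> i = 2 \<or> i = 3 \<or> i = 4 \<or> i = 5 \<or> i = 6" by auto
        then show ?thesis using e0 e1 e2 z3 e456 by auto
      next
        case False
        then have "i \<notin> Poly_Mapping.keys m" "i \<notin> Poly_Mapping.keys m'" using k by auto
        then show ?thesis by (simp add: in_keys_iff)
      qed
    qed
  qed
  define a' where "a' e = Poly_Mapping.lookup B (inv_into K psi e)" for e
  have "\<forall>e\<in>psi ` K. a' e = 0"
  proof (rule mID[where D = UNIV and n = 5])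
    show "infinite (UNIV :: 'k set)" by (rule alg_closed_infinite[OF ac])
    show "finite (psi ` K)" using Kf by simp
    show "\<forall>e\<in>psi ` K. \<forall>e'\<in>psi ` K. (\<forall>i<5. e i = e' i) \<longrightarrow> e = e'"
    proof (intro ballI impI ext)
      fix e e' i assume "e \<in> psi ` K" "e' \<in> psi ` K" and h: "\<forall>i<5. e i = e' i"
      then obtain m m' where "e = psi m" "e' = psi m'" by auto
      then show "e i = e' i" using h by (cases "i < 5") (auto simp: psi_def)
    qed
    show "\<forall>z. (\<forall>i<5. z i \<in> UNIV) \<longrightarrow> (\<Sum>e\<in>psi ` K. a' e * (\<Prod>i<5. z i ^ e i)) = 0"
    proof (intro allI impI)
      fix z :: "nat \<Rightarrow> 'k"
      obtain u v w where uvw: "u + v + w = z 0" "u * v + v * w + u * w = z 1" "u * v * w = z 2"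
        using cubic_roots[OF ac] by blast
      have zz: "(\<Prod>i<5. z i ^ psi m i) = (\<Prod>i<5. (\<lambda>i. if i = 0 then u + v + w else if i = 1 then u * v + v * w + u * w
      else if i = 2 then u * v * w else if i = 3 then z 3 else z 4) i ^ psi m i)" for m
        unfolding lt5 using uvw by simp
      have "(\<Sum>e\<in>psi ` K. a' e * (\<Prod>i<5. z i ^ e i)) = (\<Sum>m\<in>K. a' (psi m) * (\<Prod>i<5. z i ^ psi m i))"
        by (rule sum.reindex[OF inj, unfolded comp_def])
      also have "\<dots> = (\<Sum>m\<in>K. Poly_Mapping.lookup B m * mon G7 m (Tm u v w (z 3) (z 4)))"
      proof (rule sum.cong[OF refl])
        fix m assume m: "m \<in> K"
        have "Poly_Mapping.keys m \<subseteq> {0..<7}" using vars m unfolding mpoly_vars_in_def K_def by auto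
        moreover have "Poly_Mapping.lookup m 3 = 0" using no3 m unfolding K_def by auto
        ultimately show "a' (psi m) * (\<Prod>i<5. z i ^ psi m i) = Poly_Mapping.lookup B m * mon G7 m (Tm u v w (z 3) (z 4))"
          unfolding a'_def using inv_into_f_f[OF inj m] by (simp add: mon_Tm zz)
      qed
      also have "\<dots> = mpoly_eval B G7 (Tm u v w (z 3) (z 4))"
        unfolding K_def mpoly_eval_mon ..
      also have "\<dots> = 0" using van by blast
      finally show "(\<Sum>e\<in>psi ` K. a' e * (\<Prod>i<5. z i ^ e i)) = 0" .
    qed
  qed
  then have "\<forall>m\<in>K. Poly_Mapping.lookup B m = 0"
    unfolding a'_def using inv_into_f_f[OF inj] by auto
  then have "\<forall>m. Poly_Mapping.lookup B m = 0" unfolding K_def by (auto simp: in_keys_iff)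
  then show ?thesis by (intro poly_mapping_eqI) simp
qed

lemma pf_prod: "finite S \<Longrightarrow> (\<And>s. s \<in> S \<Longrightarrow> f s \<in> poly_fun) \<Longrightarrow> (\<lambda>x. \<Prod>s\<in>S. f s x) \<in> poly_fun"
proof (induction S rule: finite_induct)
  case empty then show ?case using pf_const[of 1] by simp
next
  case (insert a S)
  then have "(\<lambda>x. f a x * (\<Prod>s\<in>S. f s x)) \<in> poly_fun" by (intro pf_mult) auto
  then show ?case using insert by simp
qed

lemma G7_pf: "i < 7 \<Longrightarrow> (G7 i :: 'k::field^3^3 \<Rightarrow> 'k) \<in> poly_fun"
proof -
  assume "i < 7"
  then have "i = 0 \<or> i = 1 \<or> i = 2 \<or> i = 3 \<or> i = 4 \<or> i = 5 \<or> i = 6" by auto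
  then show ?thesis using pf_s1 pf_s2 pf_s3 pf_xi31 pf_m13 pf_d1 pf_d2 by auto
qed

lemma ev_pf:
  fixes P :: "'k::field mpoly"
  assumes "mpoly_vars_in {0..<7} P"
  shows "mpoly_eval P G7 \<in> poly_fun"
proof -
  have "(\<lambda>x. \<Sum>m\<in>Poly_Mapping.keys P. (\<lambda>m x. Poly_Mapping.lookup P m * mon G7 m x) m x) \<in> poly_fun"
  proof (rule pf_sum)
    fix m assume m: "m \<in> Poly_Mapping.keys P"
    have "(\<lambda>x. (\<lambda>x. Poly_Mapping.lookup P m) x * (\<lambda>x. \<Prod>i\<in>Poly_Mapping.keys m. (\<lambda>i x. G7 i x ^ Poly_Mapping.lookup m i) i x) x) \<in> poly_fun"
    proof (intro pf_mult pf_const pf_prod)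
      fix i assume "i \<in> Poly_Mapping.keys m"
      have "i \<in> {0..<7}" using assms m \<open>i \<in> Poly_Mapping.keys m\<close> unfolding mpoly_vars_in_def by blast
      then have "i < 7" by simp
      then show "(\<lambda>x. G7 i x ^ Poly_Mapping.lookup m i) \<in> poly_fun" by (intro pf_pow G7_pf)
    qed simp
    then show "(\<lambda>x. Poly_Mapping.lookup P m * mon G7 m x) \<in> poly_fun" unfolding mon_def by simp
  qed simp
  then show ?thesis unfolding mpoly_eval_mon[abs_def] by simp
qed

lemma sum_split_filter: "finite A \<Longrightarrow> sum f A = sum f {x\<in>A. Q x} + sum f {x\<in>A. \<not> Q x}"
  by (subst sum.union_disjoint[symmetric]) (auto intro: sum.cong)

lemma keys_sum_single_inj:
  fixes c :: "'a \<Rightarrow> 'b::comm_monoid_add"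
  assumes "finite A" "inj_on f A" "\<forall>a\<in>A. c a \<noteq> 0"
  shows "Poly_Mapping.keys (\<Sum>a\<in>A. Poly_Mapping.single (f a) (c a)) = f ` A"
proof -
  have l: "Poly_Mapping.lookup (\<Sum>a\<in>A. Poly_Mapping.single (f a) (c a)) k = (if k \<in> f ` A then c (inv_into A f k) else 0)" for k
  proof -
    have "Poly_Mapping.lookup (\<Sum>a\<in>A. Poly_Mapping.single (f a) (c a)) k = (\<Sum>a\<in>A. if f a = k then c a else 0)"
      by (simp add: lookup_sum lookup_single when_def)
    also have "\<dots> = (if k \<in> f ` A then c (inv_into A f k) else 0)"
    proof (cases "k \<in> f ` A")
      case True
      then obtain a0 where a0: "a0 \<in> A" "k = f a0" by auto
      have "(\<Sum>a\<in>A. if f a = k then c a else 0) = (\<Sum>a\<in>A. if a = a0 then c a else 0)"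
        using assms(2) a0 by (intro sum.cong) (auto simp: inj_on_def)
      also have "\<dots> = c a0" using assms(1) a0 by simp
      finally show ?thesis using True a0 inv_into_f_f[OF assms(2) a0(1)] by simp
    next
      case False
      have "(\<Sum>a\<in>A. if f a = k then c a else 0) = 0" using False by (intro sum.neutral) auto
      then show ?thesis using False by simp
    qed
    finally show ?thesis .
  qed
  show ?thesis
  proof
    show "Poly_Mapping.keys (\<Sum>a\<in>A. Poly_Mapping.single (f a) (c a)) \<subseteq> f ` A"
      by (auto simp: in_keys_iff l split: if_splits)
    show "f ` A \<subseteq> Poly_Mapping.keys (\<Sum>a\<in>A. Poly_Mapping.single (f a) (c a))"
    proof
      fix k assume k: "k \<in> f ` A"
      then have "inv_into A f k \<in> A" by (auto intro: inv_into_into)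
      then show "k \<in> Poly_Mapping.keys (\<Sum>a\<in>A. Poly_Mapping.single (f a) (c a))"
        using assms(3) k by (auto simp: in_keys_iff l)
    qed
  qed
qed

lemma mvar3_mult:
  "mvar 3 * (Q::'k::comm_ring_1 mpoly) = (\<Sum>m\<in>Poly_Mapping.keys Q. Poly_Mapping.single (sg 3 1 + m) (Poly_Mapping.lookup Q m))"
proof -
  have "mvar 3 * Q = mvar 3 * (\<Sum>m\<in>Poly_Mapping.keys Q. Poly_Mapping.single m (Poly_Mapping.lookup Q m))"
    by (subst poly_mapping_sum_single[of Q]) (rule refl)
  also have "\<dots> = (\<Sum>m\<in>Poly_Mapping.keys Q. Poly_Mapping.single (sg 3 1 + m) (Poly_Mapping.lookup Q m))"
    unfolding mvar_def sum_distrib_left by (simp add: mult_single)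
  finally show ?thesis .
qed

lemma keys_mvar3_mult:
  "Poly_Mapping.keys (mvar 3 * (Q::'k::comm_ring_1 mpoly)) = (\<lambda>m. sg 3 1 + m) ` Poly_Mapping.keys Q"
  unfolding mvar3_mult by (rule keys_sum_single_inj) (auto simp: inj_on_def in_keys_iff)

definition mu3 :: "'k::zero mpoly \<Rightarrow> nat" where
  "mu3 P = (\<Sum>m\<in>Poly_Mapping.keys P. Poly_Mapping.lookup m 3)"

lemma mu3_mvar3:
  assumes "Q \<noteq> (0::'k::comm_ring_1 mpoly)"
  shows "mu3 Q < mu3 (mvar 3 * Q)"
proof -
  have "mu3 (mvar 3 * Q) = (\<Sum>m\<in>Poly_Mapping.keys Q. Poly_Mapping.lookup (sg 3 1 + m) 3)"
    unfolding mu3_def keys_mvar3_mult by (subst sum.reindex) (auto simp: inj_on_def)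
  also have "\<dots> = (\<Sum>m\<in>Poly_Mapping.keys Q. Suc (Poly_Mapping.lookup m 3))"
    by (simp add: lookup_add)
  also have "\<dots> = card (Poly_Mapping.keys Q) + mu3 Q"
    unfolding mu3_def by (simp add: sum_Suc)
  moreover have "card (Poly_Mapping.keys Q) > 0" using assms by (simp add: card_gt_0_iff)
  ultimately show ?thesis by simp
qed


lemma keys_sum_sub: "Poly_Mapping.keys (sum b I) \<subseteq> (\<Union>i\<in>I. Poly_Mapping.keys (b i))"
proof (induction I rule: infinite_finite_induct)
  case (insert x F)
  then show ?case using keys_add[of "b x" "sum b F"] by auto
qed auto

lemma Tm31: "(Tm u v w a b :: 'k::field^3^3) $ 3 $ 1 = 0" unfolding Tm_def by simp

lemma split_Y3:
  fixes B :: "'k::field mpoly"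
  assumes ac: "alg_closed_field TYPE('k)"
    and vars: "mpoly_vars_in {0..<7} B" and red: "reduced B"
    and van0: "\<forall>x. x$3$1 = 0 \<longrightarrow> mpoly_eval B G7 x = 0"
  shows "\<exists>B1. B = mvar 3 * B1 \<and> mpoly_vars_in {0..<7} B1 \<and> reduced B1"
proof -
  define K where "K = Poly_Mapping.keys B"
  define K0 where "K0 = {m\<in>K. Poly_Mapping.lookup m 3 = 0}"
  define K1 where "K1 = {m\<in>K. \<not> Poly_Mapping.lookup m 3 = 0}"
  define B0 where "B0 = (\<Sum>m\<in>K0. Poly_Mapping.single m (Poly_Mapping.lookup B m))"
  define B1 where "B1 = (\<Sum>m\<in>K1. Poly_Mapping.single (m - sg 3 1) (Poly_Mapping.lookup B m))"
  have fK: "finite K" unfolding K_def by simp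
  have shift: "sg 3 1 + (m - sg 3 1) = m" if "m \<in> K1" for m
    using that unfolding K1_def
    by (intro poly_mapping_eqI) (auto simp: lookup_add lookup_minus lookup_single when_def)
  have "mvar 3 * B1 = (\<Sum>m\<in>K1. Poly_Mapping.single (sg 3 1 + (m - sg 3 1)) (Poly_Mapping.lookup B m))"
    unfolding B1_def mvar_def sum_distrib_left by (simp add: mult_single)
  also have "\<dots> = (\<Sum>m\<in>K1. Poly_Mapping.single m (Poly_Mapping.lookup B m))"
    by (rule sum.cong[OF refl]) (metis shift)
  finally have m3B1: "mvar 3 * B1 = (\<Sum>m\<in>K1. Poly_Mapping.single m (Poly_Mapping.lookup B m))" .
  have BB: "B = B0 + mvar 3 * B1"
  proof -
    have "B = (\<Sum>m\<in>K. Poly_Mapping.single m (Poly_Mapping.lookup B m))"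
      unfolding K_def by (rule poly_mapping_sum_single)
    also have "\<dots> = B0 + mvar 3 * B1"
      unfolding m3B1 B0_def K0_def K1_def by (rule sum_split_filter[OF fK])
    finally show ?thesis .
  qed
  have kB0: "Poly_Mapping.keys B0 \<subseteq> K0"
    unfolding B0_def using keys_sum_sub[of "\<lambda>m. Poly_Mapping.single m (Poly_Mapping.lookup B m)" K0] by auto
  have kB1: "Poly_Mapping.keys B1 \<subseteq> (\<lambda>m. m - sg 3 1) ` K1"
    unfolding B1_def using keys_sum_sub[of "\<lambda>m. Poly_Mapping.single (m - sg 3 1) (Poly_Mapping.lookup B m)" K1] by auto
  have B0z: "B0 = 0"
  proof (rule test_zero[OF ac])
    show "mpoly_vars_in {0..<7} B0" using kB0 vars unfolding mpoly_vars_in_def K0_def K_def by auto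
    show "reduced B0" using kB0 red unfolding reduced_def K0_def K_def by auto
    show "\<forall>m\<in>Poly_Mapping.keys B0. Poly_Mapping.lookup m 3 = 0" using kB0 unfolding K0_def by auto
    show "\<forall>u v w a b. mpoly_eval B0 G7 (Tm u v w a b) = 0"
    proof (intro allI)
      fix u v w a b :: 'k
      have "mpoly_eval B G7 (Tm u v w a b) = mpoly_eval B0 G7 (Tm u v w a b) + (Tm u v w a b)$3$1 * mpoly_eval B1 G7 (Tm u v w a b)"
        by (subst BB) (simp add: eval_add eval_mult eval_mvar)
      then show "mpoly_eval B0 G7 (Tm u v w a b) = 0" using van0 Tm31[of u v w a b] by simp
    qed
  qed
  have "mpoly_vars_in {0..<7} B1"
    unfolding mpoly_vars_in_def
  proof
    fix m' assume "m' \<in> Poly_Mapping.keys B1"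
    then obtain m where m: "m \<in> K1" "m' = m - sg 3 1" using kB1 by auto
    then have "Poly_Mapping.keys m \<subseteq> {0..<7}" using vars unfolding mpoly_vars_in_def K1_def K_def by auto
    then show "Poly_Mapping.keys m' \<subseteq> {0..<7}" using m(2)
      by (auto simp: in_keys_iff lookup_minus)
  qed
  moreover have "reduced B1"
    unfolding reduced_def
  proof
    fix m' assume "m' \<in> Poly_Mapping.keys B1"
    then obtain m where m: "m \<in> K1" "m' = m - sg 3 1" using kB1 by auto
    then have "Poly_Mapping.lookup m 5 = 0 \<or> Poly_Mapping.lookup m 6 = 0"
      using red unfolding reduced_def K1_def K_def by auto
    then show "Poly_Mapping.lookup m' 5 = 0 \<or> Poly_Mapping.lookup m' 6 = 0" using m(2)
      by (simp add: lookup_minus lookup_single)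
  qed
  ultimately show ?thesis using BB B0z by auto
qed

lemma kern:
  fixes B :: "'k::field mpoly"
  assumes ac: "alg_closed_field TYPE('k)"
  shows "mpoly_vars_in {0..<7} B \<Longrightarrow> reduced B \<Longrightarrow> (\<forall>x. mpoly_eval B G7 x = 0) \<Longrightarrow> B = 0"
proof (induction "mu3 B" arbitrary: B rule: less_induct)
  case less
  obtain B1 where B1: "B = mvar 3 * B1" "mpoly_vars_in {0..<7} B1" "reduced B1"
    using split_Y3[OF ac less.prems(1,2)] less.prems(3) by blast
  have "mpoly_eval B1 G7 = (\<lambda>x. 0)"
  proof (rule pf_cancel31[OF alg_closed_infinite[OF ac] ev_pf[OF B1(2)]])
    show "\<forall>x. x $ 3 $ 1 \<noteq> 0 \<longrightarrow> mpoly_eval B1 G7 x = 0"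
    proof (intro allI impI)
      fix x :: "'k^3^3" assume x: "x$3$1 \<noteq> 0"
      have "x$3$1 * mpoly_eval B1 G7 x = mpoly_eval B G7 x"
        unfolding B1(1) by (simp add: eval_mult eval_mvar)
      then show "mpoly_eval B1 G7 x = 0" using less.prems(3) x by simp
    qed
  qed
  show "B = 0"
  proof (cases "B1 = 0")
    case True then show ?thesis using B1 by simp
  next
    case False
    then have "mu3 B1 < mu3 B" unfolding B1(1) by (rule mu3_mvar3)
    then have "B1 = 0" using less.hyps B1(2,3) \<open>mpoly_eval B1 G7 = (\<lambda>x. 0)\<close> by auto
    then show ?thesis using False by simp
  qed
qed


abbreviation SG7 :: "('k::field^3^3 \<Rightarrow> 'k) set" where
  "SG7 \<equiv> subalg_gen (G7 ` {0..<7})"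

lemma sg_pow: "f \<in> subalg_gen S \<Longrightarrow> (\<lambda>x. f x ^ n) \<in> subalg_gen S"
proof (induction n)
  case 0 then show ?case using sg_const[of 1] by simp
next
  case (Suc n)
  then have "(\<lambda>x. f x * f x ^ n) \<in> subalg_gen S" by (intro sg_mult) auto
  then show ?case by simp
qed

lemma sg_sum: "finite I \<Longrightarrow> (\<And>s. s \<in> I \<Longrightarrow> f s \<in> subalg_gen S) \<Longrightarrow> (\<lambda>x. \<Sum>s\<in>I. f s x) \<in> subalg_gen S"
proof (induction I rule: finite_induct)
  case empty then show ?case using sg_const[of 0] by simp
next
  case (insert a I)
  then have "(\<lambda>x. f a x + (\<Sum>s\<in>I. f s x)) \<in> subalg_gen S" by (intro sg_add) auto
  then show ?case using insert by simp
qed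

lemma sg_prod: "finite I \<Longrightarrow> (\<And>s. s \<in> I \<Longrightarrow> f s \<in> subalg_gen S) \<Longrightarrow> (\<lambda>x. \<Prod>s\<in>I. f s x) \<in> subalg_gen S"
proof (induction I rule: finite_induct)
  case empty then show ?case using sg_const[of 1] by simp
next
  case (insert a I)
  then have "(\<lambda>x. f a x * (\<Prod>s\<in>I. f s x)) \<in> subalg_gen S" by (intro sg_mult) auto
  then show ?case using insert by simp
qed

lemma sg_diff: "f \<in> subalg_gen S \<Longrightarrow> g \<in> subalg_gen S \<Longrightarrow> (\<lambda>x. f x - g x) \<in> subalg_gen (S::('a \<Rightarrow> 'k::comm_ring_1) set)"
proof -
  assume f: "f \<in> subalg_gen S" and g: "g \<in> subalg_gen S"
  have "(\<lambda>x. f x + (\<lambda>x. -1) x * g x) \<in> subalg_gen S"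
    by (intro sg_add f sg_mult g sg_const)
  then show ?thesis by simp
qed

lemma G7_SG: "i < 7 \<Longrightarrow> G7 i \<in> SG7"
  by (rule sg_gen) auto

lemma ev_SG:
  fixes P :: "'k::field mpoly"
  assumes "mpoly_vars_in {0..<7} P"
  shows "mpoly_eval P G7 \<in> SG7"
proof -
  have "(\<lambda>x. \<Sum>m\<in>Poly_Mapping.keys P. (\<lambda>m x. Poly_Mapping.lookup P m * mon G7 m x) m x) \<in> SG7"
  proof (rule sg_sum)
    fix m assume m: "m \<in> Poly_Mapping.keys P"
    have "(\<lambda>x. (\<lambda>x. Poly_Mapping.lookup P m) x * (\<lambda>x. \<Prod>i\<in>Poly_Mapping.keys m. (\<lambda>i x. G7 i x ^ Poly_Mapping.lookup m i) i x) x) \<in> SG7"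
    proof (intro sg_mult sg_const sg_prod)
      fix i assume i: "i \<in> Poly_Mapping.keys m"
      have "i \<in> {0..<7}" using assms m i unfolding mpoly_vars_in_def by blast
      then have "i < 7" by simp
      then show "(\<lambda>x. G7 i x ^ Poly_Mapping.lookup m i) \<in> SG7" by (intro sg_pow G7_SG)
    qed simp
    then show "(\<lambda>x. Poly_Mapping.lookup P m * mon G7 m x) \<in> SG7" unfolding mon_def by simp
  qed simp
  then show ?thesis unfolding mpoly_eval_mon[abs_def] by simp
qed

lemma SG_ev:
  fixes f :: "'k::field^3^3 \<Rightarrow> 'k"
  assumes "f \<in> SG7"
  shows "\<exists>P. mpoly_vars_in {0..<7} P \<and> f = mpoly_eval P G7"
  using assms
proof (induction rule: subalg_gen.induct)
  case (sg_const c)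
  show ?case
    by (intro exI[of _ "Poly_Mapping.single 0 c"] conjI vars_single ext) (simp_all add: eval_const)
next
  case (sg_gen f)
  then obtain i where i: "i < 7" "f = G7 i" by auto
  show ?case by (intro exI[of _ "mvar i"] conjI vars_mvar ext) (simp_all add: eval_mvar i)
next
  case (sg_add f g)
  then obtain P Q where "mpoly_vars_in {0..<7} P" "f = mpoly_eval P G7" "mpoly_vars_in {0..<7} Q" "g = mpoly_eval Q G7" by blast
  then show ?case by (intro exI[of _ "P + Q"] conjI vars_add ext) (simp_all add: eval_add)
next
  case (sg_mult f g)
  then obtain P Q where "mpoly_vars_in {0..<7} P" "f = mpoly_eval P G7" "mpoly_vars_in {0..<7} Q" "g = mpoly_eval Q G7" by blast
  then show ?case by (intro exI[of _ "P * Q"] conjI vars_mult ext) (simp_all add: eval_mult)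
qed

lemma upper_unitri_invertible:
  fixes u :: "'k::field^3^3"
  assumes "upper_unitri u" shows "invertible u"
proof -
  have "u = ut (u$1$2) (u$1$3) (u$2$3)" by (rule upper_unitri_ut[OF assms])
  moreover have "invertible (ut a b e :: 'k^3^3)" for a b e
    unfolding invertible_def
    by (intro exI[of _ "mk3 1 (-a) (a*e - b) 0 1 (-e) 0 0 1"]) (simp add: ut_def mk3_mult mat1_mk3 algebra_simps)
  ultimately show ?thesis by metis
qed

lemma G7_inv_U: "i < 7 \<Longrightarrow> (G7 i :: 'k::field^3^3 \<Rightarrow> 'k) \<in> inv_U"
proof -
  assume "i < 7"
  then have "i = 0 \<or> i = 1 \<or> i = 2 \<or> i = 3 \<or> i = 4 \<or> i = 5 \<or> i = 6" by auto
  then show ?thesis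
    unfolding inv_U_def
    using pf_s1 pf_s2 pf_s3 pf_xi31 pf_m13 pf_d1 pf_d2
      act_s1[OF upper_unitri_invertible] act_s2[OF upper_unitri_invertible] act_s3[OF upper_unitri_invertible]
      act_ut_xi31 act_ut_m13 act_ut_d1 act_ut_d2
    by auto
qed

lemma SG_inv_U: "f \<in> SG7 \<Longrightarrow> (f :: 'k::field^3^3 \<Rightarrow> 'k) \<in> inv_U"
proof (induction rule: subalg_gen.induct)
  case (sg_const c) then show ?case unfolding inv_U_def act_def by (simp add: pf_const)
next
  case (sg_gen f) then show ?case using G7_inv_U by auto
next
  case (sg_add f g) then show ?case unfolding inv_U_def act_def by (auto intro: pf_add simp: fun_eq_iff)
next
  case (sg_mult f g) then show ?case unfolding inv_U_def act_def by (auto intro: pf_mult simp: fun_eq_iff)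
qed

lemma inv_U_conj: "f \<in> inv_U \<Longrightarrow> upper_unitri u \<Longrightarrow> f (matrix_inv u ** x ** u) = f x"
  unfolding inv_U_def act_def by (auto simp: fun_eq_iff)


lemma upper_unitri_ut': "upper_unitri (ut a b e :: 'k::field^3^3)"
  unfolding upper_unitri_def ut_def by (simp add: entry_def)

lemma slice_exists:
  fixes x :: "'k::field^3^3"
  assumes c: "x$3$1 \<noteq> 0"
  shows "\<exists>u. upper_unitri u \<and> (matrix_inv u ** x ** u)$1$1 = 0 \<and> (matrix_inv u ** x ** u)$2$1 = 0 \<and> (matrix_inv u ** x ** u)$3$2 = 0"
proof -
  define e where "e = x$2$1 / x$3$1"
  define a where "a = - x$3$2 / x$3$1"
  define b where "b = a * e + (x$1$1 - a * x$2$1) / x$3$1"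
  have "(matrix_inv (ut a b e) ** x ** ut a b e)$1$1 = 0 \<and> (matrix_inv (ut a b e) ** x ** ut a b e)$2$1 = 0
     \<and> (matrix_inv (ut a b e) ** x ** ut a b e)$3$2 = 0"
    unfolding conj_ut mk3_mult using c by (simp add: a_def b_def e_def field_simps)
  then show ?thesis using upper_unitri_ut' by blast
qed

definition Aent :: "3 \<Rightarrow> 3 \<Rightarrow> 'k::field^3^3 \<Rightarrow> 'k" where
  "Aent i j = (\<lambda>x. let c = x$3$1; m = minor 1 3 x in
     if i = 1 then (if j = 1 then 0 else if j = 2 then - d2 x * c else - m * c * s1 x - m^2 - s2 x * c^2)
     else if i = 2 then (if j = 1 then 0 else if j = 2 then - m * c^2 else - d1 x * c)
     else (if j = 1 then c^4 else if j = 2 then 0 else s1 x * c^3 + m * c^2))"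

lemma slice_entries:
  fixes y :: "'k::field^3^3"
  assumes "y$1$1 = 0" "y$2$1 = 0" "y$3$2 = 0"
  shows "y$i$j * (y$3$1)^3 = Aent i j y"
proof -
  have "i = 1 \<or> i = 2 \<or> i = 3" "j = 1 \<or> j = 2 \<or> j = 3" using exhaust_3 by auto
  then show ?thesis
    using assms by (auto simp: Aent_def Let_def gen_simps algebra_simps power2_eq_square power3_eq_cube power4_eq_xxxx)
qed

definition Pent :: "3 \<Rightarrow> 3 \<Rightarrow> 'k::field mpoly" where
  "Pent i j = (let c = mvar 3; m = mvar 4 in
     if i = 1 then (if j = 1 then 0 else if j = 2 then - mvar 6 * c else - m * c * mvar 0 - m^2 - mvar 1 * c^2)
     else if i = 2 then (if j = 1 then 0 else if j = 2 then - m * c^2 else - mvar 5 * c)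
     else (if j = 1 then c^4 else if j = 2 then 0 else mvar 0 * c^3 + m * c^2))"

lemma Aent_ev: "Aent i j = mpoly_eval (Pent i j) (G7 :: nat \<Rightarrow> 'k::field^3^3 \<Rightarrow> 'k)"
proof (rule ext)
  fix x :: "'k^3^3"
  have "i = 1 \<or> i = 2 \<or> i = 3" "j = 1 \<or> j = 2 \<or> j = 3" using exhaust_3 by auto
  then show "Aent i j x = mpoly_eval (Pent i j) G7 x"
    by (auto simp: Aent_def Pent_def Let_def eval_simps)
qed

lemma Pent_vars: "mpoly_vars_in {0..<7} (Pent i j :: 'k::field mpoly)"
proof -
  have "i = 1 \<or> i = 2 \<or> i = 3" "j = 1 \<or> j = 2 \<or> j = 3" using exhaust_3 by auto
  then show ?thesis
    unfolding Pent_def Let_def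
    by (elim disjE; simp; intro vars_add vars_diff vars_uminus vars_mult vars_power vars_mvar vars_zero; simp)
qed

lemma Aent_SG: "Aent i j \<in> (SG7 :: ('k::field^3^3 \<Rightarrow> 'k) set)"
  unfolding Aent_ev by (rule ev_SG[OF Pent_vars])

lemma xi31_SG: "(\<lambda>x::'k::field^3^3. x$3$1) \<in> SG7"
proof -
  have eq: "G7 3 = (\<lambda>x::'k^3^3. x$3$1)" by (rule ext) simp
  have "G7 3 \<in> (SG7 :: ('k^3^3 \<Rightarrow> 'k) set)" by (rule G7_SG) simp
  then show ?thesis by (simp only: eq)
qed

lemma slice_poly:
  fixes h :: "'k::field^3^3 \<Rightarrow> 'k"
  assumes "h \<in> poly_fun"
  shows "\<exists>N A. A \<in> SG7 \<and> (\<forall>x y. x$3$1 \<noteq> 0 \<longrightarrow> (\<forall>i j. y$i$j * (x$3$1)^3 = Aent i j x) \<longrightarrow> h y * (x$3$1)^N = A x)"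
  using assms
proof (induction rule: poly_fun.induct)
  case (pf_const c)
  show ?case by (intro exI[of _ 0] exI[of _ "\<lambda>x. c"] conjI sg_const) simp
next
  case (pf_coord i j)
  show ?case by (intro exI[of _ 3] exI[of _ "Aent i j"] conjI Aent_SG) simp
next
  case (pf_add f g)
  then obtain N1 A1 N2 A2 where 1: "A1 \<in> SG7" "\<forall>x y. x$3$1 \<noteq> 0 \<longrightarrow> (\<forall>i j. y$i$j * (x$3$1)^3 = Aent i j x) \<longrightarrow> f y * (x$3$1)^N1 = A1 x"
    and 2: "A2 \<in> SG7" "\<forall>x y. x$3$1 \<noteq> 0 \<longrightarrow> (\<forall>i j. y$i$j * (x$3$1)^3 = Aent i j x) \<longrightarrow> g y * (x$3$1)^N2 = A2 x"
    by blast
  have "(\<lambda>x. A1 x * (\<lambda>x. x$3$1 ^ N2) x + A2 x * (\<lambda>x. x$3$1 ^ N1) x) \<in> SG7"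
    by (intro sg_add sg_mult 1(1) 2(1) sg_pow xi31_SG)
  moreover have "\<forall>x y. x$3$1 \<noteq> 0 \<longrightarrow> (\<forall>i j. y$i$j * (x$3$1)^3 = Aent i j x) \<longrightarrow>
      (f y + g y) * (x$3$1)^(N1 + N2) = A1 x * x$3$1 ^ N2 + A2 x * x$3$1 ^ N1"
  proof (intro allI impI)
    fix x y :: "'k^3^3" assume a: "x$3$1 \<noteq> 0" "\<forall>i j. y$i$j * (x$3$1)^3 = Aent i j x"
    have "(f y + g y) * (x$3$1)^(N1 + N2) = (f y * (x$3$1)^N1) * x$3$1 ^ N2 + (g y * (x$3$1)^N2) * x$3$1 ^ N1"
      by (simp add: power_add algebra_simps)
    then show "(f y + g y) * (x$3$1)^(N1 + N2) = A1 x * x$3$1 ^ N2 + A2 x * x$3$1 ^ N1"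
      using 1(2) 2(2) a by simp
  qed
  ultimately show ?case by (intro exI[of _ "N1 + N2"] exI) (rule conjI)
next
  case (pf_mult f g)
  then obtain N1 A1 N2 A2 where 1: "A1 \<in> SG7" "\<forall>x y. x$3$1 \<noteq> 0 \<longrightarrow> (\<forall>i j. y$i$j * (x$3$1)^3 = Aent i j x) \<longrightarrow> f y * (x$3$1)^N1 = A1 x"
    and 2: "A2 \<in> SG7" "\<forall>x y. x$3$1 \<noteq> 0 \<longrightarrow> (\<forall>i j. y$i$j * (x$3$1)^3 = Aent i j x) \<longrightarrow> g y * (x$3$1)^N2 = A2 x"
    by blast
  have "(\<lambda>x. A1 x * A2 x) \<in> SG7" by (intro sg_mult 1(1) 2(1))
  moreover have "\<forall>x y. x$3$1 \<noteq> 0 \<longrightarrow> (\<forall>i j. y$i$j * (x$3$1)^3 = Aent i j x) \<longrightarrow>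
      (f y * g y) * (x$3$1)^(N1 + N2) = A1 x * A2 x"
  proof (intro allI impI)
    fix x y :: "'k^3^3" assume a: "x$3$1 \<noteq> 0" "\<forall>i j. y$i$j * (x$3$1)^3 = Aent i j x"
    have "(f y * g y) * (x$3$1)^(N1 + N2) = (f y * (x$3$1)^N1) * (g y * (x$3$1)^N2)"
      by (simp add: power_add algebra_simps)
    then show "(f y * g y) * (x$3$1)^(N1 + N2) = A1 x * A2 x"
      using 1(2) 2(2) a by simp
  qed
  ultimately show ?case by (intro exI[of _ "N1 + N2"] exI) (rule conjI)
qed

lemma inv_U_pf: "f \<in> inv_U \<Longrightarrow> f \<in> poly_fun" unfolding inv_U_def by simp

lemma SG_pf: "f \<in> SG7 \<Longrightarrow> (f :: 'k::field^3^3 \<Rightarrow> 'k) \<in> poly_fun"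
  using SG_inv_U inv_U_pf by blast

lemma inv_U_clear:
  fixes f :: "'k::field^3^3 \<Rightarrow> 'k"
  assumes ac: "alg_closed_field TYPE('k)" and f: "f \<in> inv_U"
  shows "\<exists>N P. mpoly_vars_in {0..<7} P \<and> (\<forall>x. f x * (x$3$1)^N = mpoly_eval P G7 x)"
proof -
  obtain N A where A: "A \<in> SG7"
    "\<forall>x y. x$3$1 \<noteq> 0 \<longrightarrow> (\<forall>i j. y$i$j * (x$3$1)^3 = Aent i j x) \<longrightarrow> f y * (x$3$1)^N = A x"
    using slice_poly[OF inv_U_pf[OF f]] by blast
  have off: "\<forall>x. x$3$1 \<noteq> 0 \<longrightarrow> (\<lambda>x. f x * (\<lambda>x. x$3$1 ^ N) x - A x) x = 0"
  proof (intro allI impI)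
    fix x :: "'k^3^3" assume c: "x$3$1 \<noteq> 0"
    obtain u where u: "upper_unitri u" "(matrix_inv u ** x ** u)$1$1 = 0" "(matrix_inv u ** x ** u)$2$1 = 0" "(matrix_inv u ** x ** u)$3$2 = 0"
      using slice_exists[OF c] by blast
    define y where "y = matrix_inv u ** x ** u"
    have y31: "y$3$1 = x$3$1"
      using inv_U_conj[OF G7_inv_U[of 3] u(1), of x] unfolding y_def by simp
    have "\<forall>i j. y$i$j * (x$3$1)^3 = Aent i j x"
    proof (intro allI)
      fix i j
      have "y$i$j * (y$3$1)^3 = Aent i j y" using slice_entries u(2-4) unfolding y_def by blast
      moreover have "Aent i j y = Aent i j x"
        unfolding y_def by (rule inv_U_conj[OF SG_inv_U[OF Aent_SG] u(1)])
      ultimately show "y$i$j * (x$3$1)^3 = Aent i j x" using y31 by simp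
    qed
    then have "f y * (x$3$1)^N = A x" using A(2) c by blast
    moreover have "f y = f x" unfolding y_def by (rule inv_U_conj[OF f u(1)])
    ultimately show "(\<lambda>x. f x * (\<lambda>x. x$3$1 ^ N) x - A x) x = 0" by simp
  qed
  have "(\<lambda>x. f x * (\<lambda>x. x$3$1 ^ N) x - A x) = (\<lambda>x. 0)"
    by (rule pf_cancel31[OF alg_closed_infinite[OF ac] _ off])
       (intro pf_diff pf_mult pf_pow pf_coord inv_U_pf[OF f] SG_pf[OF A(1)])
  then have "\<forall>x. f x * (x$3$1)^N = A x" by (simp add: fun_eq_iff)
  moreover obtain P where "mpoly_vars_in {0..<7} P" "A = mpoly_eval P G7" using SG_ev[OF A(1)] by blast
  ultimately show ?thesis by auto
qed

lemma descent:
  fixes f :: "'k::field^3^3 \<Rightarrow> 'k"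
  assumes ac: "alg_closed_field TYPE('k)"
  shows "f \<in> poly_fun \<Longrightarrow> mpoly_vars_in {0..<7} P \<Longrightarrow> (\<forall>x. f x * (x$3$1)^N = mpoly_eval P G7 x) \<Longrightarrow> f \<in> SG7"
proof (induction N arbitrary: f P)
  case 0
  then have "f = mpoly_eval P G7" by (simp add: fun_eq_iff)
  then show ?case using ev_SG[OF "0.prems"(2)] by simp
next
  case (Suc N)
  obtain Q B where QB: "P = Q * Rp + B" "mpoly_vars_in {0..<7} Q" "mpoly_vars_in {0..<7} B" "reduced B"
    using red_exists[OF Suc.prems(2)] by blast
  have evB: "mpoly_eval B G7 x = f x * (x$3$1)^Suc N" for x
  proof -
    have "mpoly_eval P G7 x = mpoly_eval Q G7 x * mpoly_eval Rp G7 x + mpoly_eval B G7 x"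
      unfolding QB(1) by (simp add: eval_add eval_mult)
    then show ?thesis using Suc.prems(3) ev_Rp[of x] by simp
  qed
  obtain B1 where B1: "B = mvar 3 * B1" "mpoly_vars_in {0..<7} B1" "reduced B1"
    using split_Y3[OF ac QB(3,4)] evB by auto
  have eq: "x$3$1 * mpoly_eval B1 G7 x = x$3$1 * (f x * (x$3$1)^N)" for x
  proof -
    have "x$3$1 * mpoly_eval B1 G7 x = mpoly_eval B G7 x" unfolding B1(1) by (simp add: eval_mult eval_mvar)
    then show ?thesis using evB[of x] by (simp add: algebra_simps)
  qed
  have "(\<lambda>x. f x * (\<lambda>x. x$3$1 ^ N) x - mpoly_eval B1 G7 x) = (\<lambda>x. 0)"
  proof (rule pf_cancel31[OF alg_closed_infinite[OF ac]])
    show "(\<lambda>x. f x * (\<lambda>x. x$3$1 ^ N) x - mpoly_eval B1 G7 x) \<in> poly_fun"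
      by (intro pf_diff pf_mult pf_pow pf_coord Suc.prems(1) ev_pf[OF B1(2)])
    show "\<forall>x. x $ 3 $ 1 \<noteq> 0 \<longrightarrow> f x * x $ 3 $ 1 ^ N - mpoly_eval B1 G7 x = 0"
    proof (intro allI impI)
      fix x :: "'k^3^3" assume "x$3$1 \<noteq> 0"
      then show "f x * x $ 3 $ 1 ^ N - mpoly_eval B1 G7 x = 0" using eq[of x] by simp
    qed
  qed
  then have "\<forall>x. f x * (x$3$1)^N = mpoly_eval B1 G7 x" by (simp add: fun_eq_iff)
  then show ?case by (rule Suc.IH[OF Suc.prems(1) B1(2)])
qed

theorem inv_U_eq_SG:
  assumes ac: "alg_closed_field TYPE('k::field)"
  shows "(inv_U :: ('k^3^3 \<Rightarrow> 'k) set) = SG7"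
proof
  show "inv_U \<subseteq> (SG7 :: ('k^3^3 \<Rightarrow> 'k) set)"
  proof
    fix f :: "'k^3^3 \<Rightarrow> 'k" assume f: "f \<in> inv_U"
    obtain N P where "mpoly_vars_in {0..<7} P" "\<forall>x. f x * (x$3$1)^N = mpoly_eval P G7 x"
      using inv_U_clear[OF ac f] by blast
    then show "f \<in> SG7" using descent[OF ac inv_U_pf[OF f]] by blast
  qed
  show "SG7 \<subseteq> (inv_U :: ('k^3^3 \<Rightarrow> 'k) set)" using SG_inv_U by blast
qed


lemma diag3_mk3: "diag3 a1 a2 a3 = mk3 a1 0 0 0 a2 0 0 0 (a3::'k::field)"
  unfolding diag3_def by (simp add: vec_eq_iff forall_3)

lemma diag3_inv:
  assumes "a1 \<noteq> 0" "a2 \<noteq> 0" "a3 \<noteq> 0"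
  shows "matrix_inv (diag3 a1 a2 a3) = mk3 (1/a1) 0 0 0 (1/a2) 0 0 0 (1/(a3::'k::field))"
  unfolding diag3_mk3 by (rule matrix_inv_eqI) (simp_all add: mk3_mult mat1_mk3 assms)

definition Dconj :: "'k::field \<Rightarrow> 'k \<Rightarrow> 'k \<Rightarrow> 'k^3^3 \<Rightarrow> 'k^3^3" where
  "Dconj a1 a2 a3 x = mk3 (x$1$1) (x$1$2 * a2 / a1) (x$1$3 * a3 / a1)
      (x$2$1 * a1 / a2) (x$2$2) (x$2$3 * a3 / a2) (x$3$1 * a1 / a3) (x$3$2 * a2 / a3) (x$3$3)"

lemma act_diag3:
  assumes "a1 \<noteq> 0" "a2 \<noteq> 0" "a3 \<noteq> 0"
  shows "act (diag3 a1 a2 a3) f = (\<lambda>x. f (Dconj a1 a2 a3 x))"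
proof -
  have inv: "matrix_inv (mk3 a1 0 0 0 a2 0 0 0 a3) = mk3 (1/a1) 0 0 0 (1/a2) 0 0 0 (1/a3)"
    using diag3_inv[OF assms] unfolding diag3_mk3 .
  have "matrix_inv (diag3 a1 a2 a3) ** x ** diag3 a1 a2 a3 = Dconj a1 a2 a3 x" for x
    unfolding diag3_mk3 inv Dconj_def
    by (subst mk3_expand[of x]) (simp add: mk3_mult assms field_simps)
  then show ?thesis unfolding act_def by simp
qed

lemma Dconj_gens:
  assumes "a1 \<noteq> 0" "a2 \<noteq> 0" "a3 \<noteq> 0"
  shows "xi 3 1 (Dconj a1 a2 a3 x) = a1 / a3 * xi 3 1 x"
    "minor 1 3 (Dconj a1 a2 a3 x) = a1 / a3 * minor 1 3 x"
    "d1 (Dconj a1 a2 a3 x) = a1^2 / (a2 * a3) * d1 x"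
    "d2 (Dconj a1 a2 a3 x) = a1 * a2 / a3^2 * d2 x"
  unfolding Dconj_def using assms by (simp_all add: gen_simps field_simps power2_eq_square)

lemma diag3_invertible:
  assumes "a1 \<noteq> 0" "a2 \<noteq> 0" "a3 \<noteq> 0"
  shows "invertible (diag3 a1 a2 (a3::'k::field))"
  unfolding invertible_def
  by (intro exI[of _ "mk3 (1/a1) 0 0 0 (1/a2) 0 0 0 (1/a3)"]) (simp add: diag3_mk3 mk3_mult mat1_mk3 assms)

lemma Dconj_s:
  assumes "a1 \<noteq> 0" "a2 \<noteq> 0" "a3 \<noteq> 0"
  shows "s1 (Dconj a1 a2 a3 x) = s1 x" "s2 (Dconj a1 a2 a3 x) = s2 x" "s3 (Dconj a1 a2 a3 x) = s3 x"
  using act_s1[OF diag3_invertible[OF assms]] act_s2[OF diag3_invertible[OF assms]] act_s3[OF diag3_invertible[OF assms]]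
  unfolding act_diag3[OF assms] by (metis)+

definition pw :: "(nat \<Rightarrow>\<^sub>0 nat) \<Rightarrow> nat" where
  "pw m = Poly_Mapping.lookup m 3 + Poly_Mapping.lookup m 4 + 2 * Poly_Mapping.lookup m 5 + Poly_Mapping.lookup m 6"
definition qw :: "(nat \<Rightarrow>\<^sub>0 nat) \<Rightarrow> nat" where
  "qw m = Poly_Mapping.lookup m 3 + Poly_Mapping.lookup m 4 + Poly_Mapping.lookup m 5 + 2 * Poly_Mapping.lookup m 6"

lemma Dconj_31: "(Dconj a1 a2 a3 x) $ 3 $ 1 = x$3$1 * a1 / a3" unfolding Dconj_def by simp

lemma mon_Dconj:
  fixes y z :: "'k::field"
  assumes k: "Poly_Mapping.keys m \<subseteq> {0..<7}" and yz: "y \<noteq> 0" "z \<noteq> 0"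
  shows "mon G7 m (Dconj y 1 (1/z) x) = y ^ pw m * z ^ qw m * mon G7 m x"
proof -
  have nz: "y \<noteq> 0" "(1::'k) \<noteq> 0" "1/z \<noteq> 0" using yz by auto
  have "mon G7 m (Dconj y 1 (1/z) x) = (\<Prod>i<7. G7 i (Dconj y 1 (1/z) x) ^ Poly_Mapping.lookup m i)"
    by (rule mon_superset) (use k in auto)
  also have "\<dots> = (\<Prod>i<7. G7 i x ^ Poly_Mapping.lookup m i) * ((y * z) ^ Poly_Mapping.lookup m 3 * (y * z) ^ Poly_Mapping.lookup m 4
      * (y^2 * z) ^ Poly_Mapping.lookup m 5 * (y * z^2) ^ Poly_Mapping.lookup m 6)"
    unfolding lt7 using yz
    by (simp add: Dconj_s[OF nz] Dconj_gens[OF nz] Dconj_gens[OF nz, unfolded One_nat_def] Dconj_31 power_mult_distrib field_simps power2_eq_square)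
  also have "(y * z) ^ Poly_Mapping.lookup m 3 * (y * z) ^ Poly_Mapping.lookup m 4
      * (y^2 * z) ^ Poly_Mapping.lookup m 5 * (y * z^2) ^ Poly_Mapping.lookup m 6 = y ^ pw m * z ^ qw m"
    unfolding pw_def qw_def by (simp add: power_add power_mult_distrib power_mult[symmetric] mult_ac)
  also have "(\<Prod>i<7. G7 i x ^ Poly_Mapping.lookup m i) = mon G7 m x"
    by (rule mon_superset[symmetric]) (use k in auto)
  finally show ?thesis by (simp add: mult_ac)
qed

lemma regroup_image:
  fixes g :: "'m \<Rightarrow> 'k::comm_ring_1"
  assumes "finite S" "finite K" "phi ` K \<subseteq> S"
  shows "(\<Sum>e\<in>S. (\<Sum>m\<in>{m\<in>K. phi m = e}. g m) * w e) = (\<Sum>m\<in>K. g m * w (phi m))"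
proof -
  have "(\<Sum>e\<in>S. (\<Sum>m\<in>{m\<in>K. phi m = e}. g m) * w e) = (\<Sum>e\<in>S. \<Sum>m\<in>K. if phi m = e then g m * w e else 0)"
    using assms(2) by (intro sum.cong refl) (simp add: sum_distrib_right sum.inter_filter[symmetric])
  also have "\<dots> = (\<Sum>m\<in>K. \<Sum>e\<in>S. if phi m = e then g m * w e else 0)"
    by (rule sum.swap)
  also have "\<dots> = (\<Sum>m\<in>K. g m * w (phi m))"
    using assms by (intro sum.cong refl) (auto simp: sum.delta)
  finally show ?thesis .
qed

lemma weight_decomp:
  fixes f :: "'k::field^3^3 \<Rightarrow> 'k"
  assumes ac: "alg_closed_field TYPE('k)" and f: "f \<in> inv_U"
    and wt: "\<forall>y z x. y \<noteq> 0 \<longrightarrow> z \<noteq> 0 \<longrightarrow> f (Dconj y 1 (1/z) x) = y ^ P * z ^ Q * f x"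
  shows "\<exists>B. mpoly_vars_in {0..<7} B \<and> reduced B \<and> (\<forall>m\<in>Poly_Mapping.keys B. pw m = P \<and> qw m = Q) \<and> f = mpoly_eval B G7"
proof -
  have inf: "infinite (UNIV :: 'k set)" by (rule alg_closed_infinite[OF ac])
  obtain P0 where P0: "mpoly_vars_in {0..<7} P0" "f = mpoly_eval P0 G7"
    using SG_ev inv_U_eq_SG[OF ac] f by blast
  obtain Q0 B0 where QB: "P0 = Q0 * Rp + B0" "mpoly_vars_in {0..<7} B0" "reduced B0"
    using red_exists[OF P0(1)] by blast
  have fB0: "f x = mpoly_eval B0 G7 x" for x
    using P0(2) QB(1) ev_Rp[of x] by (simp add: eval_add eval_mult)
  define K where "K = Poly_Mapping.keys B0"
  define KL where "KL = {m\<in>K. pw m = P \<and> qw m = Q}"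
  define B where "B = (\<Sum>m\<in>KL. Poly_Mapping.single m (Poly_Mapping.lookup B0 m))"
  have fK: "finite K" unfolding K_def by simp
  have kB: "Poly_Mapping.keys B \<subseteq> KL"
    unfolding B_def using keys_sum_sub[of "\<lambda>m. Poly_Mapping.single m (Poly_Mapping.lookup B0 m)" KL] by auto
  have vB: "mpoly_vars_in {0..<7} B" using kB QB(2) unfolding mpoly_vars_in_def KL_def K_def by auto
  have rB: "reduced B" using kB QB(3) unfolding reduced_def KL_def K_def by auto
  have wB: "\<forall>m\<in>Poly_Mapping.keys B. pw m = P \<and> qw m = Q" using kB unfolding KL_def by auto
  have evB: "mpoly_eval B G7 x = f x" for x
  proof -
    define g where "g m = Poly_Mapping.lookup B0 m * mon G7 m x" for m
    define phi where "phi m = (\<lambda>i::nat. if i = 0 then pw m else if i = 1 then qw m else 0)" for m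
    define phiL where "phiL = (\<lambda>i::nat. if i = 0 then P else if i = 1 then Q else 0)"
    define S where "S = insert phiL (phi ` K)"
    define a where "a e = (\<Sum>m\<in>{m\<in>K. phi m = e}. g m) - (if e = phiL then f x else 0)" for e
    have fS: "finite S" unfolding S_def using fK by simp
    have "\<forall>e\<in>S. a e = 0"
    proof (rule mID[where D = "UNIV - {0}" and n = 2])
      show "infinite (UNIV - {0::'k})" using inf by simp
      show "finite S" by (rule fS)
      show "\<forall>e\<in>S. \<forall>e'\<in>S. (\<forall>i<2. e i = e' i) \<longrightarrow> e = e'"
      proof (intro ballI impI ext)
        fix e e' i assume e: "e \<in> S" "e' \<in> S" and h: "\<forall>i<2. e i = e' i"
        have z: "\<forall>i\<ge>2. e i = 0" "\<forall>i\<ge>2. e' i = 0" using e unfolding S_def phi_def phiL_def by auto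
        show "e i = e' i" using h z by (cases "i < 2") auto
      qed
      show "\<forall>zz. (\<forall>i<2. zz i \<in> UNIV - {0}) \<longrightarrow> (\<Sum>e\<in>S. a e * (\<Prod>i<2. zz i ^ e i)) = 0"
      proof (intro allI impI)
        fix zz :: "nat \<Rightarrow> 'k" assume zz: "\<forall>i<2. zz i \<in> UNIV - {0}"
        define y where "y = zz 0"
        define z where "z = zz 1"
        have yz: "y \<noteq> 0" "z \<noteq> 0" using zz unfolding y_def z_def by auto
        have pr: "(\<Prod>i<2. zz i ^ e i) = y ^ e 0 * z ^ e 1" for e :: "nat \<Rightarrow> nat"
          unfolding y_def z_def by (simp add: numeral_2_eq_2 lessThan_Suc)
        have "(\<Sum>e\<in>S. a e * (\<Prod>i<2. zz i ^ e i)) =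
            (\<Sum>e\<in>S. (\<Sum>m\<in>{m\<in>K. phi m = e}. g m) * (y ^ e 0 * z ^ e 1)) - (\<Sum>e\<in>S. (if e = phiL then f x else 0) * (y ^ e 0 * z ^ e 1))"
          unfolding a_def pr by (simp add: left_diff_distrib sum_subtractf)
        also have "(\<Sum>e\<in>S. (\<Sum>m\<in>{m\<in>K. phi m = e}. g m) * (y ^ e 0 * z ^ e 1)) = (\<Sum>m\<in>K. g m * (y ^ pw m * z ^ qw m))"
          by (subst regroup_image[OF fS fK]) (auto simp: S_def phi_def)
        also have "\<dots> = mpoly_eval B0 G7 (Dconj y 1 (1/z) x)"
        proof -
          have "mpoly_eval B0 G7 (Dconj y 1 (1/z) x) = (\<Sum>m\<in>K. Poly_Mapping.lookup B0 m * mon G7 m (Dconj y 1 (1/z) x))"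
            unfolding K_def mpoly_eval_mon ..
          also have "\<dots> = (\<Sum>m\<in>K. g m * (y ^ pw m * z ^ qw m))"
          proof (rule sum.cong[OF refl])
            fix m assume "m \<in> K"
            then have "Poly_Mapping.keys m \<subseteq> {0..<7}" using QB(2) unfolding mpoly_vars_in_def K_def by auto
            then show "Poly_Mapping.lookup B0 m * mon G7 m (Dconj y 1 (1/z) x) = g m * (y ^ pw m * z ^ qw m)"
              unfolding g_def using mon_Dconj[OF _ yz] by (simp add: mult_ac)
          qed
          finally show ?thesis by simp
        qed
        also have "\<dots> = y ^ P * z ^ Q * f x"
        proof -
          have "f (Dconj y 1 (1/z) x) = y ^ P * z ^ Q * f x" using wt yz by blast
          then show ?thesis using fB0[of "Dconj y 1 (1/z) x"] by simp
        qed
        also have "(\<Sum>e\<in>S. (if e = phiL then f x else 0) * (y ^ e 0 * z ^ e 1)) = f x * (y ^ P * z ^ Q)"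
        proof -
          have "(\<Sum>e\<in>S. (if e = phiL then f x else 0) * (y ^ e 0 * z ^ e 1)) = (\<Sum>e\<in>S. if e = phiL then f x * (y ^ e 0 * z ^ e 1) else 0)"
            by (rule sum.cong) auto
          also have "\<dots> = f x * (y ^ phiL 0 * z ^ phiL 1)"
            using fS by (simp only: sum.delta) (simp add: S_def)
          finally show ?thesis by (simp add: phiL_def)
        qed
        finally show "(\<Sum>e\<in>S. a e * (\<Prod>i<2. zz i ^ e i)) = 0" by (simp add: mult_ac)
      qed
    qed
    then have "a phiL = 0" unfolding S_def by simp
    then have "(\<Sum>m\<in>{m\<in>K. phi m = phiL}. g m) = f x" unfolding a_def by simp
    moreover have "{m\<in>K. phi m = phiL} = KL"
    proof -
      have iff: "phi m = phiL \<longleftrightarrow> (pw m = P \<and> qw m = Q)" for m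
      proof
        assume h: "phi m = phiL"
        then have "phi m 0 = phiL 0" "phi m 1 = phiL 1" by simp_all
        then show "pw m = P \<and> qw m = Q" unfolding phi_def phiL_def by simp
      next
        assume "pw m = P \<and> qw m = Q"
        then show "phi m = phiL" unfolding phi_def phiL_def by auto
      qed
      show ?thesis unfolding KL_def by (auto simp: iff)
    qed
    moreover have "mpoly_eval B G7 x = (\<Sum>m\<in>KL. g m)"
      unfolding B_def g_def using fK by (simp add: eval_sum eval_single KL_def)
    ultimately show ?thesis by simp
  qed
  show ?thesis using vB rB wB evB by (intro exI[of _ B]) auto
qed


lemma mon_expand:
  assumes "Poly_Mapping.keys m \<subseteq> {0..<7}"
  shows "mon G7 m (x::'k::field^3^3) = s1 x ^ Poly_Mapping.lookup m 0 * s2 x ^ Poly_Mapping.lookup m 1 * s3 x ^ Poly_Mapping.lookup m 2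
     * (x$3$1 ^ Poly_Mapping.lookup m 3 * minor 1 3 x ^ Poly_Mapping.lookup m 4) * (d1 x ^ Poly_Mapping.lookup m 5 * d2 x ^ Poly_Mapping.lookup m 6)"
proof -
  have "mon G7 m x = (\<Prod>i<7. G7 i x ^ Poly_Mapping.lookup m i)"
    by (rule mon_superset) (use assms in auto)
  then show ?thesis unfolding lt7 by (simp add: mult_ac)
qed

lemma mult_single_right:
  "(C::'k::comm_ring_1 mpoly) * Poly_Mapping.single e 1 = (\<Sum>m\<in>Poly_Mapping.keys C. Poly_Mapping.single (m + e) (Poly_Mapping.lookup C m))"
proof -
  have "C * Poly_Mapping.single e 1 = (\<Sum>m\<in>Poly_Mapping.keys C. Poly_Mapping.single m (Poly_Mapping.lookup C m)) * Poly_Mapping.single e 1"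
    by (subst poly_mapping_sum_single[of C]) (rule refl)
  also have "\<dots> = (\<Sum>m\<in>Poly_Mapping.keys C. Poly_Mapping.single (m + e) (Poly_Mapping.lookup C m))"
    unfolding sum_distrib_right by (simp add: mult_single)
  finally show ?thesis .
qed

lemma mon_sg3: "mon G7 (sg 3 i + sg 4 k + sg j p) (x::'k::field^3^3) = x$3$1 ^ i * minor 1 3 x ^ k * G7 j x ^ p"
  if "j = 5 \<or> j = 6"
  using that by (auto simp: mon_add mon_single)

lemma pw_qw_zero: "pw m = 0 \<Longrightarrow> Poly_Mapping.lookup m 3 = 0 \<and> Poly_Mapping.lookup m 4 = 0 \<and> Poly_Mapping.lookup m 5 = 0 \<and> Poly_Mapping.lookup m 6 = 0"
  unfolding pw_def by simp

lemma inv_G_inv_U: "f \<in> inv_G \<Longrightarrow> (f :: 'k::field^3^3 \<Rightarrow> 'k) \<in> inv_U"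
  unfolding inv_G_def inv_U_def using upper_unitri_invertible by blast

lemma inv_G_Dconj:
  assumes "f \<in> inv_G" "a1 \<noteq> 0" "a2 \<noteq> 0" "a3 \<noteq> 0"
  shows "f (Dconj a1 a2 a3 x) = (f x :: 'k::field)"
proof -
  have "act (diag3 a1 a2 a3) f = f" using assms diag3_invertible[OF assms(2-4)] unfolding inv_G_def by blast
  then show ?thesis unfolding act_diag3[OF assms(2-4)] by metis
qed

lemma smon_inv_G:
  fixes B :: "'k::field mpoly"
  assumes that: "finite M"
  shows "(\<lambda>x::'k^3^3. \<Sum>m\<in>M. Poly_Mapping.lookup B m * (s1 x ^ Poly_Mapping.lookup m 0 * s2 x ^ Poly_Mapping.lookup m 1 * s3 x ^ Poly_Mapping.lookup m 2)) \<in> inv_G"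
proof -
  have pf: "(\<lambda>x::'k^3^3. \<Sum>m\<in>M. (\<lambda>m x. (\<lambda>x. Poly_Mapping.lookup B m) x * ((\<lambda>x. s1 x ^ Poly_Mapping.lookup m 0) x * (\<lambda>x. s2 x ^ Poly_Mapping.lookup m 1) x * (\<lambda>x. s3 x ^ Poly_Mapping.lookup m 2) x)) m x) \<in> poly_fun"
    by (intro pf_sum[OF that] pf_mult pf_const pf_pow pf_s1 pf_s2 pf_s3)
  show ?thesis unfolding inv_G_def
    using pf by (auto simp: act_def fun_eq_iff s1_conj s2_conj s3_conj)
qed

lemma basis_generic:
  fixes e1 e2 e3 :: int and a p j P' Q' :: nat
  assumes ac: "alg_closed_field TYPE('k::field)"
    and jc: "(j = 5 \<and> P' = a + 2*p \<and> Q' = a + p) \<or> (j = 6 \<and> P' = a + p \<and> Q' = a + 2*p)"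
    and h1: "\<forall>a1 a2 a3 (x::'k^3^3). a1 \<noteq> 0 \<longrightarrow> a2 \<noteq> 0 \<longrightarrow> a3 \<noteq> 0 \<longrightarrow>
        G7 j (Dconj a1 a2 a3 x) ^ p * (a1/a3)^a = power_int a1 e1 * power_int a2 e2 * power_int a3 e3 * G7 j x ^ p"
    and h2: "\<forall>y z::'k. y \<noteq> 0 \<longrightarrow> z \<noteq> 0 \<longrightarrow> power_int y e1 * power_int 1 e2 * power_int (1/z) e3 = y^P' * z^Q'"
  shows "is_module_basis inv_G (inv_U_wt e1 e2 e3) (\<lambda>i (x::'k^3^3). G7 j x ^ p * xi 3 1 x ^ i * minor 1 3 x ^ (a - i)) {0..a}"
proof -
  define b where "b = (\<lambda>i (x::'k^3^3). G7 j x ^ p * xi 3 1 x ^ i * minor 1 3 x ^ (a - i))"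
  have j7: "j < 7" using jc by auto
  have bSG: "b i \<in> SG7" for i
  proof -
    have "(\<lambda>x. G7 j x ^ p * G7 3 x ^ i * G7 4 x ^ (a - i)) \<in> (SG7 :: ('k^3^3 \<Rightarrow> 'k) set)"
      by (intro sg_mult sg_pow G7_SG j7) auto
    then show ?thesis unfolding b_def by simp
  qed
  have bwt: "act (diag3 a1 a2 a3) (b i) = (\<lambda>x. (power_int a1 e1 * power_int a2 e2 * power_int a3 e3) * b i x)"
    if nz: "a1 \<noteq> 0" "a2 \<noteq> 0" "a3 \<noteq> 0" and i: "i \<in> {0..a}" for a1 a2 a3 i
  proof -
    have "b i (Dconj a1 a2 a3 x) = (power_int a1 e1 * power_int a2 e2 * power_int a3 e3) * b i x" for x
    proof -
      have 1: "xi 3 1 (Dconj a1 a2 a3 x) ^ i = (a1/a3)^i * xi 3 1 x ^ i"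
        by (simp only: Dconj_gens[OF nz] power_mult_distrib)
      have 2: "minor 1 3 (Dconj a1 a2 a3 x) ^ (a - i) = (a1/a3)^(a - i) * minor 1 3 x ^ (a - i)"
        by (simp only: Dconj_gens[OF nz] power_mult_distrib)
      have "b i (Dconj a1 a2 a3 x) = G7 j (Dconj a1 a2 a3 x) ^ p * ((a1/a3) ^ i * (a1/a3) ^ (a - i)) * (xi 3 1 x ^ i * minor 1 3 x ^ (a - i))"
        unfolding b_def 1 2 by (simp add: mult_ac)
      also have "(a1/a3) ^ i * (a1/a3) ^ (a - i) = (a1/a3)^a"
        using i by (simp add: power_add[symmetric])
      also have "G7 j (Dconj a1 a2 a3 x) ^ p * (a1 / a3) ^ a = power_int a1 e1 * power_int a2 e2 * power_int a3 e3 * G7 j x ^ p"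
        using h1 nz by blast
      finally show ?thesis unfolding b_def by (simp add: mult_ac)
    qed
    then show ?thesis unfolding act_diag3[OF nz] by simp
  qed
  have P1: "\<forall>i\<in>{0..a}. b i \<in> inv_U_wt e1 e2 e3"
  proof
    fix i assume i: "i \<in> {0..a}"
    show "b i \<in> inv_U_wt e1 e2 e3"
      unfolding inv_U_wt_def
    proof (intro CollectI conjI allI impI)
      show "b i \<in> inv_U" by (rule SG_inv_U[OF bSG])
      fix a1 a2 a3 :: 'k assume "a1 \<noteq> 0 \<and> a2 \<noteq> 0 \<and> a3 \<noteq> 0"
      then show "act (diag3 a1 a2 a3) (b i) = (\<lambda>x. power_int a1 e1 * power_int a2 e2 * power_int a3 e3 * b i x)"
        using bwt i by blast
    qed
  qed
  have P2: "\<forall>f\<in>inv_U_wt e1 e2 e3. \<exists>c. (\<forall>i\<in>{0..a}. c i \<in> inv_G) \<and> f = (\<lambda>x. \<Sum>i\<in>{0..a}. c i x * b i x)"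
  proof
    fix f :: "'k^3^3 \<Rightarrow> 'k" assume fW: "f \<in> inv_U_wt e1 e2 e3"
    have fU: "f \<in> inv_U" using fW unfolding inv_U_wt_def by simp
    have wt: "\<forall>y z x. y \<noteq> 0 \<longrightarrow> z \<noteq> 0 \<longrightarrow> f (Dconj y 1 (1/z) x) = y ^ P' * z ^ Q' * f x"
    proof (intro allI impI)
      fix y z :: 'k and x assume yz: "y \<noteq> 0" "z \<noteq> 0"
      have nz: "y \<noteq> 0" "(1::'k) \<noteq> 0" "1/z \<noteq> 0" using yz by auto
      have "act (diag3 y 1 (1/z)) f = (\<lambda>x. (power_int y e1 * power_int 1 e2 * power_int (1/z) e3) * f x)"
        using fW nz unfolding inv_U_wt_def by blast
      then show "f (Dconj y 1 (1/z) x) = y ^ P' * z ^ Q' * f x"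
        unfolding act_diag3[OF nz] using h2 yz by (metis)
    qed
    obtain B where B: "mpoly_vars_in {0..<7} B" "reduced B" "\<forall>m\<in>Poly_Mapping.keys B. pw m = P' \<and> qw m = Q'"
      "f = mpoly_eval B G7"
      using weight_decomp[OF ac fU wt] by blast
    define K where "K = Poly_Mapping.keys B"
    have fK: "finite K" unfolding K_def by simp
    have mK: "Poly_Mapping.lookup m 3 + Poly_Mapping.lookup m 4 = a \<and> Poly_Mapping.lookup m j = p \<and>
        Poly_Mapping.lookup m (11 - j) = 0" if "m \<in> K" for m
    proof -
      have "pw m = P'" "qw m = Q'" "Poly_Mapping.lookup m 5 = 0 \<or> Poly_Mapping.lookup m 6 = 0"
        using that B(2,3) unfolding K_def reduced_def by auto
      then show ?thesis using jc unfolding pw_def qw_def by auto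
    qed
    define S where "S m x = s1 x ^ Poly_Mapping.lookup m 0 * s2 x ^ Poly_Mapping.lookup m 1 * s3 x ^ Poly_Mapping.lookup m 2" for m :: "nat \<Rightarrow>\<^sub>0 nat" and x :: "'k^3^3"
    have monK: "mon G7 m x = S m x * b (Poly_Mapping.lookup m 3) x" if m: "m \<in> K" for m x
    proof -
      have k: "Poly_Mapping.keys m \<subseteq> {0..<7}" using m B(1) unfolding K_def mpoly_vars_in_def by auto
      have m4: "Poly_Mapping.lookup m 4 = a - Poly_Mapping.lookup m 3" using mK[OF m] by linarith
      have "d1 x ^ Poly_Mapping.lookup m 5 * d2 x ^ Poly_Mapping.lookup m 6 = G7 j x ^ p"
        using mK[OF m] jc by auto
      then show ?thesis unfolding mon_expand[OF k] S_def b_def m4 by (simp add: mult_ac)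
    qed
    define c where "c i x = (\<Sum>m\<in>{m\<in>K. Poly_Mapping.lookup m 3 = i}. Poly_Mapping.lookup B m * S m x)" for i and x :: "'k^3^3"
    have cG: "\<forall>i\<in>{0..a}. c i \<in> inv_G"
    proof
      fix i
      have "(\<lambda>x::'k^3^3. \<Sum>m\<in>{m\<in>K. Poly_Mapping.lookup m 3 = i}. Poly_Mapping.lookup B m * (s1 x ^ Poly_Mapping.lookup m 0 * s2 x ^ Poly_Mapping.lookup m 1 * s3 x ^ Poly_Mapping.lookup m 2)) \<in> inv_G"
        by (rule smon_inv_G) (use fK in simp)
      then show "c i \<in> inv_G" unfolding c_def[abs_def] S_def by simp
    qed
    have "f x = (\<Sum>i\<in>{0..a}. c i x * b i x)" for x
    proof -
      have "f x = (\<Sum>m\<in>K. Poly_Mapping.lookup B m * mon G7 m x)" unfolding B(4) K_def mpoly_eval_mon ..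
      also have "\<dots> = (\<Sum>m\<in>K. (Poly_Mapping.lookup B m * S m x) * b (Poly_Mapping.lookup m 3) x)"
        by (intro sum.cong refl) (simp add: monK mult_ac)
      also have "\<dots> = (\<Sum>i\<in>{0..a}. (\<Sum>m\<in>{m\<in>K. Poly_Mapping.lookup m 3 = i}. Poly_Mapping.lookup B m * S m x) * b i x)"
      proof (rule regroup_image[symmetric])
        show "(\<lambda>m. Poly_Mapping.lookup m 3) ` K \<subseteq> {0..a}"
        proof
          fix k assume "k \<in> (\<lambda>m. Poly_Mapping.lookup m 3) ` K"
          then obtain m where "m \<in> K" "k = Poly_Mapping.lookup m 3" by blast
          then show "k \<in> {0..a}" using mK[of m] by (simp add: le_add1[of _ "Poly_Mapping.lookup m 4", THEN order_trans])
        qed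
      qed (use fK in auto)
      finally show ?thesis unfolding c_def .
    qed
    then show "\<exists>c. (\<forall>i\<in>{0..a}. c i \<in> inv_G) \<and> f = (\<lambda>x. \<Sum>i\<in>{0..a}. c i x * b i x)"
      using cG by (intro exI[of _ c]) auto
  qed
  have P3: "\<forall>c. (\<forall>i\<in>{0..a}. c i \<in> inv_G) \<and> (\<lambda>x. \<Sum>i\<in>{0..a}. c i x * b i x) = (\<lambda>x. 0) \<longrightarrow> (\<forall>i\<in>{0..a}. c i = (\<lambda>x. 0))"
  proof (intro allI impI)
    fix c :: "nat \<Rightarrow> 'k^3^3 \<Rightarrow> 'k"
    assume h: "(\<forall>i\<in>{0..a}. c i \<in> inv_G) \<and> (\<lambda>x. \<Sum>i\<in>{0..a}. c i x * b i x) = (\<lambda>x. 0)"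
    have ex: "\<forall>i\<in>{0..a}. \<exists>C. mpoly_vars_in {0..<7} C \<and> reduced C \<and> (\<forall>m\<in>Poly_Mapping.keys C. pw m = 0 \<and> qw m = 0) \<and> c i = mpoly_eval C G7"
    proof
      fix i assume i: "i \<in> {0..a}"
      have cG: "c i \<in> inv_G" using h i by blast
      have wt0: "\<forall>y z x. y \<noteq> 0 \<longrightarrow> z \<noteq> 0 \<longrightarrow> c i (Dconj y 1 (1/z) x) = y ^ 0 * z ^ 0 * c i x"
        using inv_G_Dconj[OF cG] by simp
      show "\<exists>C. mpoly_vars_in {0..<7} C \<and> reduced C \<and> (\<forall>m\<in>Poly_Mapping.keys C. pw m = 0 \<and> qw m = 0) \<and> c i = mpoly_eval C G7"
        by (rule weight_decomp[OF ac inv_G_inv_U[OF cG] wt0])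
    qed
    then obtain C where C: "\<forall>i\<in>{0..a}. mpoly_vars_in {0..<7} (C i) \<and> reduced (C i) \<and> (\<forall>m\<in>Poly_Mapping.keys (C i). pw m = 0 \<and> qw m = 0) \<and> c i = mpoly_eval (C i) G7"
      by (rule bchoice[elim_format]) blast
    define ee where "ee i = sg 3 i + sg 4 (a - i) + sg j p" for i
    define Sig where "Sig = Sigma {0..a} (\<lambda>i. Poly_Mapping.keys (C i))"
    define E where "E = (\<Sum>i\<in>{0..a}. C i * Poly_Mapping.single (ee i) 1)"
    have fSig: "finite Sig" unfolding Sig_def by simp
    have E2: "E = (\<Sum>(i, m)\<in>Sig. Poly_Mapping.single (m + ee i) (Poly_Mapping.lookup (C i) m))"
      unfolding E_def mult_single_right Sig_def by (rule sum.Sigma) auto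
    have z36: "Poly_Mapping.lookup m 3 = 0 \<and> Poly_Mapping.lookup m 4 = 0 \<and> Poly_Mapping.lookup m 5 = 0 \<and> Poly_Mapping.lookup m 6 = 0"
      if "(i, m) \<in> Sig" for i m
      using that C pw_qw_zero unfolding Sig_def by blast
    have kE: "Poly_Mapping.keys E \<subseteq> (\<lambda>(i, m). m + ee i) ` Sig"
    proof
      fix k assume "k \<in> Poly_Mapping.keys E"
      then have "k \<in> (\<Union>u\<in>Sig. Poly_Mapping.keys ((\<lambda>(i, m). Poly_Mapping.single (m + ee i) (Poly_Mapping.lookup (C i) m)) u))"
        unfolding E2 using keys_sum_sub[of "\<lambda>(i, m). Poly_Mapping.single (m + ee i) (Poly_Mapping.lookup (C i) m)" Sig] by blast
      then obtain u where u: "u \<in> Sig" "k \<in> Poly_Mapping.keys ((\<lambda>(i, m). Poly_Mapping.single (m + ee i) (Poly_Mapping.lookup (C i) m)) u)"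
        by blast
      obtain i m where "u = (i, m)" by (cases u)
      then have "k = m + ee i" using u(2) by (simp split: if_splits)
      then show "k \<in> (\<lambda>(i, m). m + ee i) ` Sig" using u(1) \<open>u = (i, m)\<close> by force
    qed
    have vE: "mpoly_vars_in {0..<7} E"
      unfolding E_def
    proof (rule vars_sum)
      fix i assume i: "i \<in> {0..a}"
      show "mpoly_vars_in {0..<7} (C i * Poly_Mapping.single (ee i) 1)"
      proof (rule vars_mult)
        show "mpoly_vars_in {0..<7} (C i)" using C i by blast
        show "mpoly_vars_in {0..<7} (Poly_Mapping.single (ee i) (1::'k))"
          by (rule vars_single) (use jc in \<open>auto simp: ee_def keys_add_nat\<close>)
      qed
    qed simp
    have rE: "reduced E"
      unfolding reduced_def
    proof
      fix k assume "k \<in> Poly_Mapping.keys E"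
      then obtain i m where im: "(i, m) \<in> Sig" "k = m + ee i" using kE by auto
      show "Poly_Mapping.lookup k 5 = 0 \<or> Poly_Mapping.lookup k 6 = 0"
        using z36[OF im(1)] jc unfolding im(2) ee_def by (auto simp: lookup_add lookup_single)
    qed
    have evE: "mpoly_eval E G7 x = 0" for x
    proof -
      have "mpoly_eval E G7 x = (\<Sum>i\<in>{0..a}. c i x * mon G7 (ee i) x)"
        unfolding E_def using C by (simp add: eval_sum eval_mult eval_single)
      also have "\<dots> = (\<Sum>i\<in>{0..a}. c i x * b i x)"
        unfolding ee_def b_def using jc by (intro sum.cong refl) (auto simp: mon_sg3 mult_ac)
      also have "\<dots> = 0" using h by metis
      finally show ?thesis .
    qed
    have E0: "E = 0" by (rule kern[OF ac vE rE]) (use evE in simp)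
    have E3: "E = (\<Sum>u\<in>Sig. Poly_Mapping.single (snd u + ee (fst u)) (Poly_Mapping.lookup (C (fst u)) (snd u)))"
      unfolding E2 by (simp add: split_def)
    have "Poly_Mapping.keys E = (\<lambda>u. snd u + ee (fst u)) ` Sig"
      unfolding E3
    proof (rule keys_sum_single_inj[OF fSig])
      show "inj_on (\<lambda>x. snd x + ee (fst x)) Sig"
      proof (rule inj_onI)
        fix u v assume u: "u \<in> Sig" and v: "v \<in> Sig" and eq: "snd u + ee (fst u) = snd v + ee (fst v)"
        have "Poly_Mapping.lookup (snd u + ee (fst u)) 3 = Poly_Mapping.lookup (snd v + ee (fst v)) 3" using eq by simp
        moreover have "Poly_Mapping.lookup (snd u) 3 = 0" "Poly_Mapping.lookup (snd v) 3 = 0"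
          using z36[of "fst u" "snd u"] z36[of "fst v" "snd v"] u v by auto
        ultimately have "fst u = fst v" using jc unfolding ee_def by (auto simp: lookup_add lookup_single)
        then have "snd u = snd v" using eq by simp
        then show "u = v" using \<open>fst u = fst v\<close> by (simp add: prod_eq_iff)
      qed
      show "\<forall>x\<in>Sig. Poly_Mapping.lookup (C (fst x)) (snd x) \<noteq> 0"
        unfolding Sig_def by (auto simp: in_keys_iff)
    qed
    then have "Sig = {}" using E0 by simp
    
    have "\<forall>i\<in>{0..a}. C i = 0"
    proof
      fix i assume i: "i \<in> {0..a}"
      have "Poly_Mapping.keys (C i) = {}"
      proof (rule ccontr)
        assume "Poly_Mapping.keys (C i) \<noteq> {}"
        then obtain m where "m \<in> Poly_Mapping.keys (C i)" by blast
        then have "(i, m) \<in> Sig" unfolding Sig_def using i by blast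
        then show False using \<open>Sig = {}\<close> by simp
      qed
      then show "C i = 0" by simp
    qed
    then show "\<forall>i\<in>{0..a}. c i = (\<lambda>x. 0)" using C by auto
  qed
  show ?thesis unfolding is_module_basis_def b_def[symmetric] by (intro conjI P1 P2 P3)
qed


lemma power_int_neg_nat: "power_int (x::'k::field) (- int n) = inverse (x ^ n)"
  by (simp add: power_int_minus)

lemma part_i_case5:
  fixes l1 l2 :: nat
  assumes ac: "alg_closed_field TYPE('k::field)" and md: "l1 mod 3 = l2 mod 3" and le: "l2 \<le> l1"
  shows "is_module_basis inv_G
             (inv_U_wt ((2 * int l1 + int l2) div 3) ((int l2 - int l1) div 3)
                       (- ((int l1 + 2 * int l2) div 3)))
             (\<lambda>i (x::'k^3^3). d1 x ^ ((l1 - l2) div 3) * xi 3 1 x ^ i * minor 1 3 x ^ (min l1 l2 - i)) {0..min l1 l2}"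
proof -
  define p where "p = (l1 - l2) div 3"
  define a where "a = l2"
  have "3 dvd (l1 - l2)" using md le by (simp add: mod_eq_dvd_iff_nat)
  then have l1: "l1 = a + 3 * p" unfolding p_def a_def using le by auto
  have mn: "min l1 l2 = a" unfolding a_def using le by simp
  have e1: "(2 * int l1 + int l2) div 3 = int (a + 2 * p)" unfolding l1 a_def by simp
  have e2: "(int l2 - int l1) div 3 = - int p" unfolding l1 a_def by simp
  have e3: "- ((int l1 + 2 * int l2) div 3) = - int (a + p)" unfolding l1 a_def by simp
  have "is_module_basis inv_G (inv_U_wt (int (a + 2 * p)) (- int p) (- int (a + p)))
       (\<lambda>i (x::'k^3^3). G7 5 x ^ p * xi 3 1 x ^ i * minor 1 3 x ^ (a - i)) {0..a}"
  proof (rule basis_generic[OF ac, where P' = "a + 2 * p" and Q' = "a + p"])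
    show "\<forall>a1 a2 a3 (x::'k^3^3). a1 \<noteq> 0 \<longrightarrow> a2 \<noteq> 0 \<longrightarrow> a3 \<noteq> 0 \<longrightarrow>
        G7 5 (Dconj a1 a2 a3 x) ^ p * (a1/a3)^a = power_int a1 (int (a + 2 * p)) * power_int a2 (- int p) * power_int a3 (- int (a + p)) * G7 5 x ^ p"
    proof (intro allI impI)
      fix a1 a2 a3 :: 'k and x :: "'k^3^3" assume nz: "a1 \<noteq> 0" "a2 \<noteq> 0" "a3 \<noteq> 0"
      have g: "G7 5 (Dconj a1 a2 a3 x) = a1^2 / (a2 * a3) * d1 x" by (simp only: G7_simps Dconj_gens[OF nz])
      have "G7 5 (Dconj a1 a2 a3 x) ^ p * (a1/a3)^a = (a1^2 / (a2 * a3))^p * (a1/a3)^a * d1 x ^ p"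
        unfolding g power_mult_distrib by (simp only: mult_ac)
      also have "(a1^2 / (a2 * a3))^p * (a1/a3)^a = a1 ^ (a + 2 * p) * inverse (a2 ^ p) * inverse (a3 ^ (a + p))"
        using nz by (simp add: power_divide power_mult_distrib power_add power_mult[symmetric] field_simps)
      finally show "G7 5 (Dconj a1 a2 a3 x) ^ p * (a1/a3)^a = power_int a1 (int (a + 2 * p)) * power_int a2 (- int p) * power_int a3 (- int (a + p)) * G7 5 x ^ p"
        by (simp only: power_int_neg_nat power_int_of_nat G7_simps)
    qed
    show "\<forall>y z::'k. y \<noteq> 0 \<longrightarrow> z \<noteq> 0 \<longrightarrow> power_int y (int (a + 2 * p)) * power_int 1 (- int p) * power_int (1/z) (- int (a + p)) = y ^ (a + 2 * p) * z ^ (a + p)"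
    proof (intro allI impI)
      fix y z :: 'k assume "y \<noteq> 0" "z \<noteq> 0"
      have "power_int y (int (a + 2 * p)) * power_int 1 (- int p) * power_int (1/z) (- int (a + p)) = y ^ (a + 2 * p) * inverse ((1/z) ^ (a + p))"
        by (simp only: power_int_neg_nat power_int_of_nat) simp
      also have "inverse ((1/z) ^ (a + p)) = z ^ (a + p)" by (simp add: power_divide)
      finally show "power_int y (int (a + 2 * p)) * power_int 1 (- int p) * power_int (1/z) (- int (a + p)) = y ^ (a + 2 * p) * z ^ (a + p)" .
    qed
  qed simp
  then show ?thesis unfolding e1 e2 e3 mn p_def[symmetric] by simp
qed

lemma part_i_case6:
  fixes l1 l2 :: nat
  assumes ac: "alg_closed_field TYPE('k::field)" and md: "l1 mod 3 = l2 mod 3" and lt: "\<not> l2 \<le> l1"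
  shows "is_module_basis inv_G
             (inv_U_wt ((2 * int l1 + int l2) div 3) ((int l2 - int l1) div 3)
                       (- ((int l1 + 2 * int l2) div 3)))
             (\<lambda>i (x::'k^3^3). d2 x ^ ((l2 - l1) div 3) * xi 3 1 x ^ i * minor 1 3 x ^ (min l1 l2 - i)) {0..min l1 l2}"
proof -
  define q where "q = (l2 - l1) div 3"
  define a where "a = l1"
  have le: "l1 \<le> l2" using lt by simp
  have "l2 mod 3 = l1 mod 3" using md by simp
  then have "3 dvd (l2 - l1)" using le by (simp add: mod_eq_dvd_iff_nat)
  then have l2: "l2 = a + 3 * q" unfolding q_def a_def using le by auto
  have mn: "min l1 l2 = a" unfolding a_def using le by simp
  have e1: "(2 * int l1 + int l2) div 3 = int (a + q)" unfolding l2 a_def by simp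
  have e2: "(int l2 - int l1) div 3 = int q" unfolding l2 a_def by simp
  have e3: "- ((int l1 + 2 * int l2) div 3) = - int (a + 2 * q)" unfolding l2 a_def by simp
  have "is_module_basis inv_G (inv_U_wt (int (a + q)) (int q) (- int (a + 2 * q)))
       (\<lambda>i (x::'k^3^3). G7 6 x ^ q * xi 3 1 x ^ i * minor 1 3 x ^ (a - i)) {0..a}"
  proof (rule basis_generic[OF ac, where P' = "a + q" and Q' = "a + 2 * q"])
    show "\<forall>a1 a2 a3 (x::'k^3^3). a1 \<noteq> 0 \<longrightarrow> a2 \<noteq> 0 \<longrightarrow> a3 \<noteq> 0 \<longrightarrow>
        G7 6 (Dconj a1 a2 a3 x) ^ q * (a1/a3)^a = power_int a1 (int (a + q)) * power_int a2 (int q) * power_int a3 (- int (a + 2 * q)) * G7 6 x ^ q"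
    proof (intro allI impI)
      fix a1 a2 a3 :: 'k and x :: "'k^3^3" assume nz: "a1 \<noteq> 0" "a2 \<noteq> 0" "a3 \<noteq> 0"
      have g: "G7 6 (Dconj a1 a2 a3 x) = a1 * a2 / a3^2 * d2 x" by (simp only: G7_simps Dconj_gens[OF nz])
      have "G7 6 (Dconj a1 a2 a3 x) ^ q * (a1/a3)^a = (a1 * a2 / a3^2)^q * (a1/a3)^a * d2 x ^ q"
        unfolding g power_mult_distrib by (simp only: mult_ac)
      also have "(a1 * a2 / a3^2)^q * (a1/a3)^a = a1 ^ (a + q) * a2 ^ q * inverse (a3 ^ (a + 2 * q))"
        using nz by (simp add: power_divide power_mult_distrib power_add power_mult[symmetric] field_simps)
      finally show "G7 6 (Dconj a1 a2 a3 x) ^ q * (a1/a3)^a = power_int a1 (int (a + q)) * power_int a2 (int q) * power_int a3 (- int (a + 2 * q)) * G7 6 x ^ q"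
        by (simp only: power_int_neg_nat power_int_of_nat G7_simps)
    qed
    show "\<forall>y z::'k. y \<noteq> 0 \<longrightarrow> z \<noteq> 0 \<longrightarrow> power_int y (int (a + q)) * power_int 1 (int q) * power_int (1/z) (- int (a + 2 * q)) = y ^ (a + q) * z ^ (a + 2 * q)"
    proof (intro allI impI)
      fix y z :: 'k assume "y \<noteq> 0" "z \<noteq> 0"
      have "power_int y (int (a + q)) * power_int 1 (int q) * power_int (1/z) (- int (a + 2 * q)) = y ^ (a + q) * inverse ((1/z) ^ (a + 2 * q))"
        by (simp only: power_int_neg_nat power_int_of_nat) simp
      also have "inverse ((1/z) ^ (a + 2 * q)) = z ^ (a + 2 * q)" by (simp add: power_divide)
      finally show "power_int y (int (a + q)) * power_int 1 (int q) * power_int (1/z) (- int (a + 2 * q)) = y ^ (a + q) * z ^ (a + 2 * q)" .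
    qed
  qed simp
  then show ?thesis unfolding e1 e2 e3 mn q_def[symmetric] by simp
qed

theorem proposition3p2:
  fixes dummy :: "'k::field"
  assumes alg_closed: "\<And>p :: 'k poly. degree p \<noteq> 0 \<Longrightarrow> \<exists>z. poly p z = 0"
  shows
    "(\<forall>l1 l2 :: nat. l1 mod 3 = l2 mod 3 \<longrightarrow>
       (let a = min l1 l2;
            d = (if l2 \<le> l1 then (\<lambda>x::'k^3^3. d1 x ^ ((l1 - l2) div 3))
                 else (\<lambda>x. d2 x ^ ((l2 - l1) div 3)))
        in is_module_basis inv_G
             (inv_U_wt ((2 * int l1 + int l2) div 3) ((int l2 - int l1) div 3)
                       (- ((int l1 + 2 * int l2) div 3)))
             (\<lambda>i x. d x * xi 3 1 x ^ i * minor 1 3 x ^ (a - i)) {0..a}))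
     \<and>
     (let gens = (\<lambda>i::nat. [s1, s2, s3, xi 3 1, minor 1 3, d1, d2] ! i)
                   :: nat \<Rightarrow> 'k^3^3 \<Rightarrow> 'k;
          Y = (mvar :: nat \<Rightarrow> 'k mpoly);
          R = Y 5 * Y 6 - Y 4 ^ 3 - Y 3 * Y 4 ^ 2 * Y 0 - Y 3 ^ 2 * Y 4 * Y 1 - Y 3 ^ 3 * Y 2
      in inv_U = subalg_gen (gens ` {0..<7})
       \<and> {P. mpoly_vars_in {0..<7} P \<and> mpoly_eval P gens = (\<lambda>x. 0)}
         = {Q * R | Q. mpoly_vars_in {0..<7} Q})"
proof -
  have ac: "alg_closed_field TYPE('k)" unfolding alg_closed_field_def using alg_closed by blast
  have I: "\<forall>l1 l2 :: nat. l1 mod 3 = l2 mod 3 \<longrightarrow>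
       (let a = min l1 l2;
            d = (if l2 \<le> l1 then (\<lambda>x::'k^3^3. d1 x ^ ((l1 - l2) div 3))
                 else (\<lambda>x. d2 x ^ ((l2 - l1) div 3)))
        in is_module_basis inv_G
             (inv_U_wt ((2 * int l1 + int l2) div 3) ((int l2 - int l1) div 3)
                       (- ((int l1 + 2 * int l2) div 3)))
             (\<lambda>i x. d x * xi 3 1 x ^ i * minor 1 3 x ^ (a - i)) {0..a})"
  proof (intro allI impI)
    fix l1 l2 :: nat assume md: "l1 mod 3 = l2 mod 3"
    show "let a = min l1 l2;
            d = (if l2 \<le> l1 then (\<lambda>x::'k^3^3. d1 x ^ ((l1 - l2) div 3))
                 else (\<lambda>x. d2 x ^ ((l2 - l1) div 3)))
        in is_module_basis inv_G
             (inv_U_wt ((2 * int l1 + int l2) div 3) ((int l2 - int l1) div 3)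
                       (- ((int l1 + 2 * int l2) div 3)))
             (\<lambda>i x. d x * xi 3 1 x ^ i * minor 1 3 x ^ (a - i)) {0..a}"
    proof (cases "l2 \<le> l1")
      case True
      then show ?thesis unfolding Let_def using part_i_case5[OF ac md True] by simp
    next
      case False
      then show ?thesis unfolding Let_def using part_i_case6[OF ac md False] by simp
    qed
  qed
  have G7eq: "(\<lambda>i::nat. [s1, s2, s3, xi 3 1, minor 1 3, d1, d2] ! i) = (G7 :: nat \<Rightarrow> 'k^3^3 \<Rightarrow> 'k)"
    unfolding G7_def ..
  have Req: "mvar 5 * mvar 6 - mvar 4 ^ 3 - mvar 3 * mvar 4 ^ 2 * mvar 0 - mvar 3 ^ 2 * mvar 4 * mvar 1 - mvar 3 ^ 3 * mvar 2 = (Rp :: 'k mpoly)"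
    unfolding Rp_def ..
  have II1: "(inv_U :: ('k^3^3 \<Rightarrow> 'k) set) = subalg_gen (G7 ` {0..<7})"
    by (rule inv_U_eq_SG[OF ac])
  have II2: "{P. mpoly_vars_in {0..<7} P \<and> mpoly_eval P (G7 :: nat \<Rightarrow> 'k^3^3 \<Rightarrow> 'k) = (\<lambda>x. 0)}
         = {Q * Rp | Q. mpoly_vars_in {0..<7} Q}"
  proof
    show "{P. mpoly_vars_in {0..<7} P \<and> mpoly_eval P (G7 :: nat \<Rightarrow> 'k^3^3 \<Rightarrow> 'k) = (\<lambda>x. 0)} \<subseteq> {Q * Rp | Q. mpoly_vars_in {0..<7} Q}"
    proof
      fix P :: "'k mpoly" assume "P \<in> {P. mpoly_vars_in {0..<7} P \<and> mpoly_eval P (G7 :: nat \<Rightarrow> 'k^3^3 \<Rightarrow> 'k) = (\<lambda>x. 0)}"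
      then have P: "mpoly_vars_in {0..<7} P" "mpoly_eval P (G7 :: nat \<Rightarrow> 'k^3^3 \<Rightarrow> 'k) = (\<lambda>x. 0)" by auto
      obtain Q B where QB: "P = Q * Rp + B" "mpoly_vars_in {0..<7} Q" "mpoly_vars_in {0..<7} B" "reduced B"
        using red_exists[OF P(1)] by blast
      have "\<forall>x. mpoly_eval B (G7 :: nat \<Rightarrow> 'k^3^3 \<Rightarrow> 'k) x = 0"
      proof
        fix x :: "'k^3^3"
        have "mpoly_eval P G7 x = mpoly_eval Q G7 x * mpoly_eval Rp G7 x + mpoly_eval B G7 x"
          unfolding QB(1) by (simp add: eval_add eval_mult)
        then show "mpoly_eval B G7 x = 0" using P(2) ev_Rp[of x] by (simp add: fun_eq_iff)
      qed
      then have "B = 0" by (rule kern[OF ac QB(3,4)])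
      then show "P \<in> {Q * Rp | Q. mpoly_vars_in {0..<7} Q}" using QB by auto
    qed
    show "{Q * Rp | Q. mpoly_vars_in {0..<7} Q} \<subseteq> {P. mpoly_vars_in {0..<7} P \<and> mpoly_eval P (G7 :: nat \<Rightarrow> 'k^3^3 \<Rightarrow> 'k) = (\<lambda>x. 0)}"
    proof
      fix P :: "'k mpoly" assume "P \<in> {Q * Rp | Q. mpoly_vars_in {0..<7} Q}"
      then obtain Q where Q: "P = Q * Rp" "mpoly_vars_in {0..<7} Q" by blast
      have "mpoly_vars_in {0..<7} P" unfolding Q(1) by (rule vars_mult[OF Q(2) vars_Rp])
      moreover have "mpoly_eval P (G7 :: nat \<Rightarrow> 'k^3^3 \<Rightarrow> 'k) = (\<lambda>x. 0)"
        unfolding Q(1) by (rule ext) (simp add: eval_mult ev_Rp)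
      ultimately show "P \<in> {P. mpoly_vars_in {0..<7} P \<and> mpoly_eval P (G7 :: nat \<Rightarrow> 'k^3^3 \<Rightarrow> 'k) = (\<lambda>x. 0)}" by simp
    qed
  qed
  show ?thesis
  proof (rule conjI)
    show "\<forall>l1 l2 :: nat. l1 mod 3 = l2 mod 3 \<longrightarrow>
       (let a = min l1 l2;
            d = (if l2 \<le> l1 then (\<lambda>x::'k^3^3. d1 x ^ ((l1 - l2) div 3))
                 else (\<lambda>x. d2 x ^ ((l2 - l1) div 3)))
        in is_module_basis inv_G
             (inv_U_wt ((2 * int l1 + int l2) div 3) ((int l2 - int l1) div 3)
                       (- ((int l1 + 2 * int l2) div 3)))
             (\<lambda>i x. d x * xi 3 1 x ^ i * minor 1 3 x ^ (a - i)) {0..a})" by (rule I)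
    show "let gens = (\<lambda>i::nat. [s1, s2, s3, xi 3 1, minor 1 3, d1, d2] ! i)
                   :: nat \<Rightarrow> 'k^3^3 \<Rightarrow> 'k;
          Y = (mvar :: nat \<Rightarrow> 'k mpoly);
          R = Y 5 * Y 6 - Y 4 ^ 3 - Y 3 * Y 4 ^ 2 * Y 0 - Y 3 ^ 2 * Y 4 * Y 1 - Y 3 ^ 3 * Y 2
      in inv_U = subalg_gen (gens ` {0..<7})
       \<and> {P. mpoly_vars_in {0..<7} P \<and> mpoly_eval P gens = (\<lambda>x. 0)}
         = {Q * R | Q. mpoly_vars_in {0..<7} Q}"
      unfolding Let_def G7eq Req by (intro conjI II1 II2)
  qed
qed


end
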